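(* Let $d\geq3$ and let $x_1,\dots,x_{d-1}$ be real numbers with $0<x_i<1$ for all $i$ and $x_i\neq x_j$ for at least one pair $(i,j)$. Let $\Omega$ be the quantum channel on $d\times d$ matrices with Kraus operators $A_0=\mathrm{diag}(1,x_1,\dots,x_{d-1})$ and, for $m=1,\dots,d-1$, $(A_m)_{ij}=\sqrt{1-x_m^2}\,\delta_{0i}\delta_{mj}$ ($i,j=0,\dots,d-1$). Then there is a pure state $|\psi'\rangle\in\mathbb{C}^d\otimes\mathbb{C}^d$ which is not maximally entangled such that for every maximally entangled state $|\Phi\rangle\in\mathbb{C}^d\otimes\mathbb{C}^d$, $$\mathbb{F}(\Omega)\geq\mathbb{F}(\rho_{\psi',\Omega})>\mathbb{F}^*(\rho_{\Phi,\Omega}).$$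
   Context: For a pure state $|\psi\rangle\in\mathbb{C}^d\otimes\mathbb{C}^d$, $\rho_{\psi,\Omega}=(\mathcal{I}\otimes\Omega)(|\psi\rangle\langle\psi|)$ with $\Omega(X)=\sum_m A_mXA_m^\dagger$. The singlet fraction of a two-qudit state $\rho$ is $\mathbb{F}(\rho)=\max_{|\Phi\rangle}\langle\Phi|\rho|\Phi\rangle$ over all maximally entangled $|\Phi\rangle\in\mathbb{C}^d\otimes\mathbb{C}^d$. The maximum achievable singlet fraction is $\mathbb{F}^*(\rho)=\max_L\mathbb{F}(L(\rho))$ over all trace-preserving LOCC operations $L$. The one-shot optimal singlet fraction of the channel is $\mathbb{F}(\Omega)=\max_{|\psi\rangle}\mathbb{F}^*(\rho_{\psi,\Omega})$ over all pure states $|\psi\rangle\in\mathbb{C}^d\otimes\mathbb{C}^d$. *)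

theory Defs
  imports "Jordan_Normal_Form.Matrix"
begin

text \<open>Conventions. A vector of the bipartite space C^a (x) C^b is a complex vector of
dimension a*b, the basis vector e_i (x) e_j having index i*b + j.\<close>

definition adj :: "complex mat \<Rightarrow> complex mat" where
  "adj A = mat (dim_col A) (dim_row A) (\<lambda>(i,j). cnj (A $$ (j,i)))"

definition kron :: "complex mat \<Rightarrow> complex mat \<Rightarrow> complex mat" where
  "kron A B = mat (dim_row A * dim_row B) (dim_col A * dim_col B)
     (\<lambda>(i,j). A $$ (i div dim_row B, j div dim_col B) * B $$ (i mod dim_row B, j mod dim_col B))"

definition ket_bra :: "complex vec \<Rightarrow> complex mat" where
  "ket_bra v = mat (dim_vec v) (dim_vec v) (\<lambda>(i,j). v $ i * cnj (v $ j))"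

definition is_unit_vec :: "nat \<Rightarrow> complex vec \<Rightarrow> bool" where
  "is_unit_vec n v \<longleftrightarrow> dim_vec v = n \<and> (\<Sum>i<n. cmod (v $ i) ^ 2) = 1"

definition ptrace_B :: "nat \<Rightarrow> nat \<Rightarrow> complex mat \<Rightarrow> complex mat" where
  "ptrace_B a b R = mat a a (\<lambda>(i,k). \<Sum>j<b. R $$ (i*b + j, k*b + j))"

definition max_ent :: "nat \<Rightarrow> complex vec \<Rightarrow> bool" where
  "max_ent d \<Phi> \<longleftrightarrow> is_unit_vec (d*d) \<Phi> \<and>
     ptrace_B d d (ket_bra \<Phi>) = (1 / of_nat d) \<cdot>\<^sub>m (1\<^sub>m d)"

definition apply_kraus :: "nat \<Rightarrow> complex mat list \<Rightarrow> complex mat \<Rightarrow> complex mat" where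
  "apply_kraus n Ks R = foldr (\<lambda>K S. K * R * adj K + S) Ks (0\<^sub>m n n)"

definition expect :: "complex vec \<Rightarrow> complex mat \<Rightarrow> real" where
  "expect \<Phi> R = Re (\<Sum>i<dim_vec \<Phi>. cnj (\<Phi> $ i) * (R *\<^sub>v \<Phi>) $ i)"

definition singlet_fraction :: "nat \<Rightarrow> complex mat \<Rightarrow> real" where
  "singlet_fraction d R = Sup {expect \<Phi> R | \<Phi>. max_ent d \<Phi>}"

text \<open>An instrument is a list of branches (outcomes),
each branch being a CP map given by a list of Kraus operators acting on the joint space.
LOCC_instr a b a' b' E : E maps C^a (x) C^b to C^a' (x) C^b'.
Rules: a local instrument of Alice (resp. Bob), with total Kraus family trace preserving,
and conditional composition (the next instrument may depend on the earlier outcome).\<close>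
inductive LOCC_instr :: "nat \<Rightarrow> nat \<Rightarrow> nat \<Rightarrow> nat \<Rightarrow> complex mat list list \<Rightarrow> bool" where
  alice: "\<lbrakk> \<forall>Ks\<in>set KKs. \<forall>K\<in>set Ks. K \<in> carrier_mat a' a;
           foldr (\<lambda>K S. adj K * K + S) (concat KKs) (0\<^sub>m a a) = 1\<^sub>m a \<rbrakk>
     \<Longrightarrow> LOCC_instr a b a' b (map (map (\<lambda>K. kron K (1\<^sub>m b))) KKs)"
| bob: "\<lbrakk> \<forall>Ks\<in>set KKs. \<forall>K\<in>set Ks. K \<in> carrier_mat b' b;
           foldr (\<lambda>K S. adj K * K + S) (concat KKs) (0\<^sub>m b b) = 1\<^sub>m b \<rbrakk>
     \<Longrightarrow> LOCC_instr a b a b' (map (map (\<lambda>K. kron (1\<^sub>m a) K)) KKs)"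
| comp: "\<lbrakk> LOCC_instr a b a' b' E;
           \<forall>k<length E. LOCC_instr a' b' a'' b'' (F k) \<rbrakk>
     \<Longrightarrow> LOCC_instr a b a'' b''
           (concat (map (\<lambda>k. map (\<lambda>Gs. concat (map (\<lambda>G. map (\<lambda>K. G * K) (E ! k)) Gs)) (F k))
                        [0..<length E]))"

text \<open>Trace-preserving LOCC channels on C^d (x) C^d (sum over all outcomes).\<close>
definition LOCC_channel :: "nat \<Rightarrow> complex mat list \<Rightarrow> bool" where
  "LOCC_channel d Ks \<longleftrightarrow> (\<exists>E. LOCC_instr d d d d E \<and> Ks = concat E)"

definition max_singlet_fraction :: "nat \<Rightarrow> complex mat \<Rightarrow> real" where
  "max_singlet_fraction d R = Sup {singlet_fraction d (apply_kraus (d*d) Ks R) | Ks. LOCC_channel d Ks}"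

text \<open>rho_{psi,Omega} = (I (x) Omega)(|psi><psi|) for a channel Omega with Kraus operators As.\<close>
definition rho_out :: "nat \<Rightarrow> complex mat list \<Rightarrow> complex vec \<Rightarrow> complex mat" where
  "rho_out d As \<psi> = apply_kraus (d*d) (map (\<lambda>A. kron (1\<^sub>m d) A) As) (ket_bra \<psi>)"

definition channel_singlet_fraction :: "nat \<Rightarrow> complex mat list \<Rightarrow> real" where
  "channel_singlet_fraction d As = Sup {max_singlet_fraction d (rho_out d As \<psi>) | \<psi>. is_unit_vec (d*d) \<psi>}"

definition kraus_A :: "nat \<Rightarrow> (nat \<Rightarrow> real) \<Rightarrow> nat \<Rightarrow> complex mat" where
  "kraus_A d x m = (if m = 0 then
       mat d d (\<lambda>(i,j). if i = j then (if i = 0 then 1 else complex_of_real (x i)) else 0)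
     else mat d d (\<lambda>(i,j). if i = 0 \<and> j = m then complex_of_real (sqrt (1 - (x m)^2)) else 0))"

definition Omega_kraus :: "nat \<Rightarrow> (nat \<Rightarrow> real) \<Rightarrow> complex mat list" where
  "Omega_kraus d x = map (kraus_A d x) [0..<d]"

end

theory Submission
  imports Defs "Jordan_Normal_Form.Determinant"
begin

lemma sum_lessThan_add: "(\<Sum>k<(m::nat)+n. f k) = (\<Sum>k<m. f k) + (\<Sum>j<n. f (m+j))"
  by (induction n) (auto simp: add_ac)

lemma sum_split_prod: "(\<Sum>r<(a::nat)*b. f r) = (\<Sum>i<a. \<Sum>j<b. f (i*b+j))"
proof (induction a)
  case 0 show ?case by simp
next
  case (Suc a)
  have "(\<Sum>r<Suc a*b. f r) = (\<Sum>r<a*b + b. f r)" by (simp add: add.commute)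
  also have "\<dots> = (\<Sum>r<a*b. f r) + (\<Sum>j<b. f (a*b+j))" by (rule sum_lessThan_add)
  finally show ?case using Suc by simp
qed

lemma idx_lt: "i < (a::nat) \<Longrightarrow> j < b \<Longrightarrow> i*b+j < a*b"
proof -
  assume "i < a" "j < b"
  then have "i*b + j < i*b + b" by simp
  also have "\<dots> = (i+1)*b" by simp
  also have "\<dots> \<le> a*b" using \<open>i<a\<close> by (intro mult_right_mono) auto
  finally show ?thesis .
qed

lemma mult_entry: "i < dim_row A \<Longrightarrow> j < dim_col B \<Longrightarrow> dim_col A = dim_row B \<Longrightarrow>
   (A*B)$$(i,j) = (\<Sum>k<dim_col A. A$$(i,k) * B$$(k,j))"
  by (simp add: scalar_prod_def lessThan_atLeast0)

lemma mult_vec_entry: "i < dim_row A \<Longrightarrow> dim_col A = dim_vec v \<Longrightarrow>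
   (A *\<^sub>v v)$i = (\<Sum>k<dim_col A. A$$(i,k) * v$k)"
  by (simp add: scalar_prod_def lessThan_atLeast0)

lemma kron_dims[simp]: "dim_row (kron A B) = dim_row A * dim_row B" "dim_col (kron A B) = dim_col A * dim_col B"
  by (auto simp: kron_def)

lemma kron_idx: "i < dim_row A \<Longrightarrow> j < dim_row B \<Longrightarrow> k < dim_col A \<Longrightarrow> l < dim_col B \<Longrightarrow>
  kron A B $$ (i*dim_row B + j, k*dim_col B + l) = A$$(i,k) * B$$(j,l)"
  by (simp add: kron_def idx_lt)

lemma kron_mult: assumes "dim_col G1 = dim_row A" "dim_col G2 = dim_row B"
  shows "kron G1 G2 * kron A B = kron (G1*A) (G2*B)"
proof (rule eq_matI)
  fix r c assume r: "r < dim_row (kron (G1*A) (G2*B))" and c: "c < dim_col (kron (G1*A) (G2*B))"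
  have r': "r < dim_row G1 * dim_row G2" and c': "c < dim_col A * dim_col B" using r c by auto
  then have p2: "dim_row G2 > 0" "dim_col B > 0" by (auto intro: Nat.gr0I)
  define r1 r2 c1 c2 where "r1 = r div dim_row G2" "r2 = r mod dim_row G2" "c1 = c div dim_col B" "c2 = c mod dim_col B"
  have rr: "r = r1 * dim_row G2 + r2" "c = c1 * dim_col B + c2" unfolding r1_r2_c1_c2_def by auto
  have lt: "r1 < dim_row G1" "r2 < dim_row G2" "c1 < dim_col A" "c2 < dim_col B"
    unfolding r1_r2_c1_c2_def using r' c' p2 by (auto simp: less_mult_imp_div_less mult.commute)
  have "(kron G1 G2 * kron A B) $$ (r,c) = (\<Sum>s<dim_col G1 * dim_col G2. kron G1 G2 $$ (r,s) * kron A B $$ (s,c))"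
    using r' c' assms by (subst mult_entry) auto
  also have "\<dots> = (\<Sum>s1<dim_col G1. \<Sum>s2<dim_col G2. kron G1 G2 $$ (r1 * dim_row G2 + r2,s1*dim_col G2+s2) * kron A B $$ (s1*dim_row B + s2, c1 * dim_col B + c2))"
    by (simp add: sum_split_prod rr assms(2)[symmetric])
  also have "\<dots> = (\<Sum>s1<dim_col G1. \<Sum>s2<dim_col G2. (G1$$(r1,s1) * A$$(s1,c1)) * (G2$$(r2,s2) * B$$(s2,c2)))"
  proof (intro sum.cong refl)
    fix s1 s2 assume s: "s1 \<in> {..<dim_col G1}" "s2 \<in> {..<dim_col G2}"
    have e1: "kron G1 G2 $$ (r1 * dim_row G2 + r2,s1*dim_col G2+s2) = G1$$(r1,s1) * G2$$(r2,s2)"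
      using s lt by (intro kron_idx) auto
    have e2: "kron A B $$ (s1*dim_row B + s2, c1 * dim_col B + c2) = A$$(s1,c1) * B$$(s2,c2)"
      using s lt assms by (intro kron_idx) auto
    show "kron G1 G2 $$ (r1 * dim_row G2 + r2,s1*dim_col G2+s2) * kron A B $$ (s1*dim_row B + s2, c1 * dim_col B + c2) = (G1$$(r1,s1) * A$$(s1,c1)) * (G2$$(r2,s2) * B$$(s2,c2))"
      unfolding e1 e2 by (simp add: ac_simps)
  qed
  also have "\<dots> = (\<Sum>s1<dim_col G1. G1$$(r1,s1) * A$$(s1,c1)) * (\<Sum>s2<dim_col G2. G2$$(r2,s2) * B$$(s2,c2))"
    by (simp add: sum_product)
  also have "\<dots> = (G1*A)$$(r1,c1) * (G2*B)$$(r2,c2)"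
    using lt assms by (simp only: mult_entry)
  also have "\<dots> = kron (G1*A) (G2*B) $$ (r1 * dim_row (G2*B) + r2, c1 * dim_col (G2*B) + c2)"
    using lt by (intro kron_idx[symmetric]) auto
  also have "\<dots> = kron (G1*A) (G2*B) $$ (r,c)"
    by (simp add: rr)
  finally show "(kron G1 G2 * kron A B) $$ (r,c) = kron (G1*A) (G2*B) $$ (r,c)" .
qed auto


lemma sl_concat: "sum_list (map f (concat xss)) = sum_list (map (\<lambda>xs. sum_list (map f xs)) xss)"
  by (induction xss) auto

lemma sl_sum_swap: "sum_list (map (\<lambda>x. \<Sum>t\<in>A. f x t) xs) = (\<Sum>t\<in>A. sum_list (map (\<lambda>x. f x t) xs))"
  by (induction xs) (auto simp: sum.distrib)

lemma sl_swap: fixes f :: "'a \<Rightarrow> 'b \<Rightarrow> 'c::comm_monoid_add" shows "sum_list (map (\<lambda>x. sum_list (map (\<lambda>y. f x y) ys)) xs) = sum_list (map (\<lambda>y. sum_list (map (\<lambda>x. f x y) xs)) ys)"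
proof (induction xs)
  case (Cons a xs)
  have "sum_list (map (\<lambda>y. f a y + sum_list (map (\<lambda>x. f x y) xs)) ys) = sum_list (map (f a) ys) + sum_list (map (\<lambda>y. sum_list (map (\<lambda>x. f x y) xs)) ys)"
    by (rule sum_list_addf)
  then show ?case using Cons by simp
qed simp

lemma sl_cong: "(\<And>x. x \<in> set xs \<Longrightarrow> f x = g x) \<Longrightarrow> sum_list (map f xs) = sum_list (map g xs)"
  by (metis map_eq_conv)

lemma idx_eq_iff: "r2 < (b::nat) \<Longrightarrow> c2 < b \<Longrightarrow> (r1*b+r2 = c1*b+c2) \<longleftrightarrow> (r1 = c1 \<and> r2 = c2)"
proof
  assume lt: "r2 < b" "c2 < b" and e: "r1*b+r2 = c1*b+c2"
  have "(r1*b+r2) mod b = r2" "(c1*b+c2) mod b = c2" using lt by auto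
  then have m: "r2 = c2" using e by simp
  have "(r1*b+r2) div b = r1" "(c1*b+c2) div b = c1" using lt by auto
  then show "r1 = c1 \<and> r2 = c2" using e m by metis
qed auto

definition gram :: "complex mat \<Rightarrow> nat \<Rightarrow> nat \<Rightarrow> complex" where
  "gram K r c = (\<Sum>s<dim_row K. cnj (K$$(s,r)) * K$$(s,c))"

definition compl :: "nat \<Rightarrow> complex mat list \<Rightarrow> bool" where
  "compl n Ks \<longleftrightarrow> (\<forall>r<n. \<forall>c<n. sum_list (map (\<lambda>K. gram K r c) Ks) = (if r = c then 1 else 0))"

definition prod_form :: "nat \<Rightarrow> nat \<Rightarrow> nat \<Rightarrow> nat \<Rightarrow> complex mat \<Rightarrow> bool" where
  "prod_form a' a b' b K \<longleftrightarrow> (\<exists>A B. A \<in> carrier_mat a' a \<and> B \<in> carrier_mat b' b \<and> K = kron A B)"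

lemma prod_form_carrier: "prod_form a' a b' b K \<Longrightarrow> K \<in> carrier_mat (a'*b') (a*b)"
  unfolding prod_form_def by auto

lemma adj_dims[simp]: "dim_row (adj K) = dim_col K" "dim_col (adj K) = dim_row K"
  by (auto simp: adj_def)

lemma adj_idx[simp]: "i < dim_col K \<Longrightarrow> j < dim_row K \<Longrightarrow> adj K $$ (i,j) = cnj (K$$(j,i))"
  by (auto simp: adj_def)

lemma foldr_gram:
  assumes "\<forall>K\<in>set Ks. K \<in> carrier_mat m n"
  shows "foldr (\<lambda>K S. adj K * K + S) Ks (0\<^sub>m n n) \<in> carrier_mat n n \<and>
    (\<forall>i<n. \<forall>j<n. foldr (\<lambda>K S. adj K * K + S) Ks (0\<^sub>m n n) $$ (i,j) = sum_list (map (\<lambda>K. gram K i j) Ks))"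
  using assms
proof (induction Ks)
  case Nil then show ?case by auto
next
  case (Cons K Ks)
  then have K: "K \<in> carrier_mat m n" by auto
  from Cons have IH: "foldr (\<lambda>K S. adj K * K + S) Ks (0\<^sub>m n n) \<in> carrier_mat n n"
     "\<forall>i<n. \<forall>j<n. foldr (\<lambda>K S. adj K * K + S) Ks (0\<^sub>m n n) $$ (i,j) = sum_list (map (\<lambda>K. gram K i j) Ks)" by auto
  show ?case
  proof
    show "foldr (\<lambda>K S. adj K * K + S) (K#Ks) (0\<^sub>m n n) \<in> carrier_mat n n" using IH(1) by auto
    show "\<forall>i<n. \<forall>j<n. foldr (\<lambda>K S. adj K * K + S) (K#Ks) (0\<^sub>m n n) $$ (i,j) = sum_list (map (\<lambda>K. gram K i j) (K#Ks))"
    proof (intro allI impI)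
      fix i j assume ij: "i < n" "j < n"
      have "(adj K * K) $$ (i,j) = gram K i j" using K ij
        by (subst mult_entry) (auto simp: gram_def)
      then show "foldr (\<lambda>K S. adj K * K + S) (K#Ks) (0\<^sub>m n n) $$ (i,j) = sum_list (map (\<lambda>K. gram K i j) (K#Ks))"
        using IH ij by auto
    qed
  qed
qed

lemma kron_gram:
  assumes A: "A \<in> carrier_mat a' a" and B: "B \<in> carrier_mat b' b"
    and r: "r1 < a" "r2 < b" and c: "c1 < a" "c2 < b"
  shows "gram (kron A B) (r1*b+r2) (c1*b+c2) = gram A r1 c1 * gram B r2 c2"
proof -
  have "gram (kron A B) (r1*b+r2) (c1*b+c2) = (\<Sum>s<a'*b'. cnj (kron A B $$ (s,r1*b+r2)) * kron A B $$ (s, c1*b+c2))"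
    using A B by (simp add: gram_def)
  also have "\<dots> = (\<Sum>s1<a'. \<Sum>s2<b'. cnj (kron A B $$ (s1*b'+s2,r1*b+r2)) * kron A B $$ (s1*b'+s2, c1*b+c2))"
    by (rule sum_split_prod)
  also have "\<dots> = (\<Sum>s1<a'. \<Sum>s2<b'. (cnj (A$$(s1,r1)) * A$$(s1,c1)) * (cnj (B$$(s2,r2)) * B$$(s2,c2)))"
  proof (intro sum.cong refl)
    fix s1 s2 assume s: "s1 \<in> {..<a'}" "s2 \<in> {..<b'}"
    have e1: "kron A B $$ (s1*b'+s2,r1*b+r2) = A$$(s1,r1) * B$$(s2,r2)"
      using A B s r kron_idx[of s1 A s2 B r1 r2] by auto
    have e2: "kron A B $$ (s1*b'+s2,c1*b+c2) = A$$(s1,c1) * B$$(s2,c2)"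
      using A B s c kron_idx[of s1 A s2 B c1 c2] by auto
    show "cnj (kron A B $$ (s1*b'+s2,r1*b+r2)) * kron A B $$ (s1*b'+s2, c1*b+c2) = (cnj (A$$(s1,r1)) * A$$(s1,c1)) * (cnj (B$$(s2,r2)) * B$$(s2,c2))"
      unfolding e1 e2 by (simp add: ac_simps)
  qed
  also have "\<dots> = gram A r1 c1 * gram B r2 c2"
    using A B by (simp add: gram_def sum_product)
  finally show ?thesis .
qed

lemma gram_one: "i < n \<Longrightarrow> j < n \<Longrightarrow> gram (1\<^sub>m n) i j = (if i = j then 1 else 0)"
proof -
  assume ij: "i < n" "j < n"
  have "gram (1\<^sub>m n) i j = (\<Sum>s<n. (if s = i then 1 else 0) * (if s = j then 1 else 0))"
    using ij by (auto simp: gram_def intro!: sum.cong)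
  also have "\<dots> = (\<Sum>s<n. if s = i then (if i = j then 1 else 0) else 0)"
    by (intro sum.cong) auto
  also have "\<dots> = (if i = j then 1 else 0)" using ij by (subst sum.delta) auto
  finally show ?thesis .
qed

lemma div_mod_lt: "r < (a::nat) * b \<Longrightarrow> r div b < a \<and> r mod b < b \<and> r = r div b * b + r mod b"
  by (metis div_mult_mod_eq less_mult_imp_div_less mod_less_divisor mult_0_right not_gr_zero not_less0)

lemma gram_mult:
  assumes G: "G \<in> carrier_mat p q" and K: "K \<in> carrier_mat q n" and r: "r < n" and c: "c < n"
  shows "gram (G*K) r c = (\<Sum>t<q. \<Sum>t'<q. cnj (K$$(t,r)) * K$$(t',c) * gram G t t')"
proof -
  have "gram (G*K) r c = (\<Sum>s<p. cnj (\<Sum>t<q. G$$(s,t) * K$$(t,r)) * (\<Sum>t'<q. G$$(s,t') * K$$(t',c)))"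
    using G K r c by (auto simp: gram_def mult_entry simp del: index_mult_mat(1) intro!: sum.cong)
  also have "\<dots> = (\<Sum>s<p. \<Sum>t<q. \<Sum>t'<q. cnj (K$$(t,r)) * K$$(t',c) * (cnj (G$$(s,t)) * G$$(s,t')))"
    by (simp add: sum_product sum_distrib_left ac_simps)
  also have "\<dots> = (\<Sum>t<q. \<Sum>t'<q. \<Sum>s<p. cnj (K$$(t,r)) * K$$(t',c) * (cnj (G$$(s,t)) * G$$(s,t')))"
    by (subst sum.swap) (simp add: sum.swap[of _ "{..<p}"])
  also have "\<dots> = (\<Sum>t<q. \<Sum>t'<q. cnj (K$$(t,r)) * K$$(t',c) * gram G t t')"
    using G by (simp add: gram_def sum_distrib_left)
  finally show ?thesis .
qed

lemma LOCC_props: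
  "LOCC_instr a b a' b' E \<Longrightarrow> (\<forall>K\<in>set (concat E). prod_form a' a b' b K) \<and> compl (a*b) (concat E)"
proof (induction rule: LOCC_instr.induct)
  case (alice KKs a' a b)
  have cK: "\<forall>K\<in>set (concat KKs). K \<in> carrier_mat a' a" using alice(1) by auto
  from foldr_gram[OF cK] alice(2)
  have g: "\<forall>i<a. \<forall>j<a. sum_list (map (\<lambda>K. gram K i j) (concat KKs)) = (if i = j then 1 else 0)"
    by auto
  show ?case
  proof
    have "\<forall>K\<in>set (concat KKs). prod_form a' a b b (kron K (1\<^sub>m b))"
      using cK one_carrier_mat unfolding prod_form_def by blast
    then show "\<forall>K\<in>set (concat (map (map (\<lambda>K. kron K (1\<^sub>m b))) KKs)). prod_form a' a b b K"
      by (simp add: map_concat[symmetric])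
    show "compl (a * b) (concat (map (map (\<lambda>K. kron K (1\<^sub>m b))) KKs))"
      unfolding compl_def
    proof (intro allI impI)
      fix r c assume r: "r < a*b" and c: "c < a*b"
      obtain r1 r2 c1 c2 where rr: "r = r1*b+r2" "c = c1*b+c2" "r1 < a" "r2 < b" "c1 < a" "c2 < b"
        using div_mod_lt[OF r] div_mod_lt[OF c] by metis
      have "sum_list (map (\<lambda>K. gram K r c) (concat (map (map (\<lambda>K. kron K (1\<^sub>m b))) KKs)))
          = sum_list (map (\<lambda>K. gram (kron K (1\<^sub>m b)) r c) (concat KKs))"
        by (simp add: map_concat[symmetric] o_def)
      also have "\<dots> = sum_list (map (\<lambda>K. gram K r1 c1 * (if r2 = c2 then 1 else 0)) (concat KKs))"
      proof (rule sl_cong)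
        fix K assume "K \<in> set (concat KKs)"
        then have "K \<in> carrier_mat a' a" using cK by auto
        then show "gram (kron K (1\<^sub>m b)) r c = gram K r1 c1 * (if r2 = c2 then 1 else 0)"
          using kron_gram[of K a' a "1\<^sub>m b" b b r1 r2 c1 c2] rr by (simp add: gram_one)
      qed
      also have "\<dots> = (if r = c then 1 else 0)"
        using g rr by (auto simp: sum_list_mult_const idx_eq_iff)
      finally show "sum_list (map (\<lambda>K. gram K r c) (concat (map (map (\<lambda>K. kron K (1\<^sub>m b))) KKs))) = (if r = c then 1 else 0)" .
    qed
  qed
next
  case (bob KKs b' b a)
  have cK: "\<forall>K\<in>set (concat KKs). K \<in> carrier_mat b' b" using bob(1) by auto
  from foldr_gram[OF cK] bob(2)
  have g: "\<forall>i<b. \<forall>j<b. sum_list (map (\<lambda>K. gram K i j) (concat KKs)) = (if i = j then 1 else 0)"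
    by auto
  show ?case
  proof
    have "\<forall>K\<in>set (concat KKs). prod_form a a b' b (kron (1\<^sub>m a) K)"
      using cK one_carrier_mat unfolding prod_form_def by blast
    then show "\<forall>K\<in>set (concat (map (map (\<lambda>K. kron (1\<^sub>m a) K)) KKs)). prod_form a a b' b K"
      by (simp add: map_concat[symmetric])
    show "compl (a * b) (concat (map (map (\<lambda>K. kron (1\<^sub>m a) K)) KKs))"
      unfolding compl_def
    proof (intro allI impI)
      fix r c assume r: "r < a*b" and c: "c < a*b"
      obtain r1 r2 c1 c2 where rr: "r = r1*b+r2" "c = c1*b+c2" "r1 < a" "r2 < b" "c1 < a" "c2 < b"
        using div_mod_lt[OF r] div_mod_lt[OF c] by metis
      have "sum_list (map (\<lambda>K. gram K r c) (concat (map (map (\<lambda>K. kron (1\<^sub>m a) K)) KKs)))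
          = sum_list (map (\<lambda>K. gram (kron (1\<^sub>m a) K) r c) (concat KKs))"
        by (simp add: map_concat[symmetric] o_def)
      also have "\<dots> = sum_list (map (\<lambda>K. (if r1 = c1 then 1 else 0) * gram K r2 c2) (concat KKs))"
      proof (rule sl_cong)
        fix K assume "K \<in> set (concat KKs)"
        then have "K \<in> carrier_mat b' b" using cK by auto
        then show "gram (kron (1\<^sub>m a) K) r c = (if r1 = c1 then 1 else 0) * gram K r2 c2"
          using kron_gram[of "1\<^sub>m a" a a K b' b r1 r2 c1 c2] rr by (simp add: gram_one)
      qed
      also have "\<dots> = (if r = c then 1 else 0)"
        using g rr by (auto simp: sum_list_const_mult idx_eq_iff)
      finally show "sum_list (map (\<lambda>K. gram K r c) (concat (map (map (\<lambda>K. kron (1\<^sub>m a) K)) KKs))) = (if r = c then 1 else 0)" .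
    qed
  qed
next
  case (comp a b a' b' E a'' b'' F)
  have PE: "\<forall>K\<in>set (concat E). prod_form a' a b' b K" and CE: "compl (a*b) (concat E)" using comp by auto
  have PF: "\<And>k. k < length E \<Longrightarrow> (\<forall>K\<in>set (concat (F k)). prod_form a'' a' b'' b' K) \<and> compl (a'*b') (concat (F k))"
    using comp by auto
  define R where "R = concat (map (\<lambda>k. map (\<lambda>Gs. concat (map (\<lambda>G. map (\<lambda>K. G * K) (E ! k)) Gs)) (F k)) [0..<length E])"
  have memR: "\<And>X. X \<in> set (concat R) \<Longrightarrow> \<exists>k<length E. \<exists>G\<in>set (concat (F k)). \<exists>K\<in>set (E!k). X = G*K"
    unfolding R_def by fastforce
  have EkE: "\<And>k K. k < length E \<Longrightarrow> K \<in> set (E!k) \<Longrightarrow> K \<in> set (concat E)"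
    using nth_mem by fastforce
  show ?case unfolding R_def[symmetric]
  proof
    show "\<forall>X\<in>set (concat R). prod_form a'' a b'' b X"
    proof
      fix X assume "X \<in> set (concat R)"
      then obtain k G K where k: "k < length E" and G: "G \<in> set (concat (F k))" and K: "K \<in> set (E!k)" and X: "X = G*K"
        using memR by blast
      obtain G1 G2 where G12: "G1 \<in> carrier_mat a'' a'" "G2 \<in> carrier_mat b'' b'" "G = kron G1 G2"
        using PF[OF k] G unfolding prod_form_def by blast
      obtain A B where AB: "A \<in> carrier_mat a' a" "B \<in> carrier_mat b' b" "K = kron A B"
        using PE EkE[OF k K] unfolding prod_form_def by blast
      have "X = kron (G1*A) (G2*B)" using G12 AB X by (simp add: kron_mult)
      moreover have "G1*A \<in> carrier_mat a'' a" "G2*B \<in> carrier_mat b'' b" using G12 AB by auto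
      ultimately show "prod_form a'' a b'' b X" unfolding prod_form_def by blast
    qed
    show "compl (a*b) (concat R)" unfolding compl_def
    proof (intro allI impI)
      fix r c assume r: "r < a*b" and c: "c < a*b"
      have cKE: "\<And>K. K \<in> set (concat E) \<Longrightarrow> K \<in> carrier_mat (a'*b') (a*b)"
        using PE prod_form_carrier by blast
      have cGF: "\<And>k G. k < length E \<Longrightarrow> G \<in> set (concat (F k)) \<Longrightarrow> G \<in> carrier_mat (a''*b'') (a'*b')"
        using PF prod_form_carrier by blast
      have "sum_list (map (\<lambda>X. gram X r c) (concat R)) =
          sum_list (map (\<lambda>k. sum_list (map (\<lambda>G. sum_list (map (\<lambda>K. gram (G*K) r c) (E!k))) (concat (F k)))) [0..<length E])"
        unfolding R_def by (simp add: sl_concat o_def)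
      also have "\<dots> = sum_list (map (\<lambda>k. sum_list (map (\<lambda>K. gram K r c) (E!k))) [0..<length E])"
      proof (rule sl_cong)
        fix k assume "k \<in> set [0..<length E]"
        then have k: "k < length E" by auto
        have "sum_list (map (\<lambda>G. sum_list (map (\<lambda>K. gram (G*K) r c) (E!k))) (concat (F k)))
            = sum_list (map (\<lambda>K. sum_list (map (\<lambda>G. gram (G*K) r c) (concat (F k)))) (E!k))"
          by (rule sl_swap)
        also have "\<dots> = sum_list (map (\<lambda>K. gram K r c) (E!k))"
        proof (rule sl_cong)
          fix K assume K: "K \<in> set (E!k)"
          have cK: "K \<in> carrier_mat (a'*b') (a*b)" using cKE EkE[OF k K] by auto
          have "sum_list (map (\<lambda>G. gram (G*K) r c) (concat (F k)))
            = sum_list (map (\<lambda>G. \<Sum>t<a'*b'. \<Sum>t'<a'*b'. cnj (K$$(t,r)) * K$$(t',c) * gram G t t') (concat (F k)))"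
          proof (rule sl_cong)
            fix G assume "G \<in> set (concat (F k))"
            then have "G \<in> carrier_mat (a''*b'') (a'*b')" using cGF[OF k] by blast
            then show "gram (G*K) r c = (\<Sum>t<a'*b'. \<Sum>t'<a'*b'. cnj (K$$(t,r)) * K$$(t',c) * gram G t t')"
              using cK r c by (rule gram_mult)
          qed
          also have "\<dots> = (\<Sum>t<a'*b'. \<Sum>t'<a'*b'. cnj (K$$(t,r)) * K$$(t',c) * sum_list (map (\<lambda>G. gram G t t') (concat (F k))))"
            by (simp add: sl_sum_swap sum_list_const_mult)
          also have "\<dots> = (\<Sum>t<a'*b'. \<Sum>t'<a'*b'. cnj (K$$(t,r)) * K$$(t',c) * (if t = t' then 1 else 0))"
            using PF[OF k] unfolding compl_def by (intro sum.cong refl) auto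
          also have "\<dots> = (\<Sum>t<a'*b'. cnj (K$$(t,r)) * K$$(t,c))"
            by (intro sum.cong refl) (simp add: if_distrib sum.delta cong: if_cong)
          also have "\<dots> = gram K r c" using cK by (simp add: gram_def)
          finally show "sum_list (map (\<lambda>G. gram (G*K) r c) (concat (F k))) = gram K r c" .
        qed
        finally show "sum_list (map (\<lambda>G. sum_list (map (\<lambda>K. gram (G*K) r c) (E!k))) (concat (F k))) = sum_list (map (\<lambda>K. gram K r c) (E!k))" .
      qed
      also have "\<dots> = sum_list (map (\<lambda>K. gram K r c) (concat (map (\<lambda>k. E!k) [0..<length E])))"
        by (simp add: sl_concat o_def)
      also have "\<dots> = sum_list (map (\<lambda>K. gram K r c) (concat E))"
        by (simp add: map_nth)
      also have "\<dots> = (if r = c then 1 else 0)" using CE r c unfolding compl_def by auto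
      finally show "sum_list (map (\<lambda>X. gram X r c) (concat R)) = (if r = c then 1 else 0)" .
    qed
  qed
qed


lemma cmod_sq_cnj: "complex_of_real (cmod z ^ 2) = z * cnj z"
  by (rule complex_norm_square)

lemma Re_mult_cnj_le: "Re (z * cnj w) \<le> (cmod z ^ 2 + cmod w ^ 2) / 2"
proof -
  have "Re (z * cnj w) \<le> cmod (z * cnj w)" by (rule complex_Re_le_cmod)
  also have "\<dots> = cmod z * cmod w" by (simp add: norm_mult)
  also have "\<dots> \<le> (cmod z ^ 2 + cmod w ^ 2) / 2"
    using sum_squares_bound[of "cmod z" "cmod w"] by (simp add: power2_eq_square field_simps)
  finally show ?thesis .
qed

lemma Y_lemma:
  fixes Y :: "'a \<Rightarrow> 'a \<Rightarrow> complex"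
  assumes "finite S"
  shows "Re (\<Sum>a\<in>S. \<Sum>b\<in>S. Y a b * cnj (Y b a)) \<le> (\<Sum>a\<in>S. \<Sum>b\<in>S. cmod (Y a b) ^ 2)"
proof -
  have "Re (\<Sum>a\<in>S. \<Sum>b\<in>S. Y a b * cnj (Y b a)) = (\<Sum>a\<in>S. \<Sum>b\<in>S. Re (Y a b * cnj (Y b a)))"
    by (simp add: Re_sum)
  also have "\<dots> \<le> (\<Sum>a\<in>S. \<Sum>b\<in>S. (cmod (Y a b) ^ 2 + cmod (Y b a) ^ 2) / 2)"
    by (intro sum_mono Re_mult_cnj_le)
  also have "\<dots> = (\<Sum>a\<in>S. \<Sum>b\<in>S. cmod (Y a b) ^ 2) / 2 + (\<Sum>a\<in>S. \<Sum>b\<in>S. cmod (Y b a) ^ 2) / 2"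
    by (simp add: sum.distrib add_divide_distrib sum_divide_distrib)
  also have "(\<Sum>a\<in>S. \<Sum>b\<in>S. cmod (Y b a) ^ 2) = (\<Sum>a\<in>S. \<Sum>b\<in>S. cmod (Y a b) ^ 2)"
    by (rule sum.swap)
  finally show ?thesis by simp
qed

lemma sum_cmod_sq_complex: "complex_of_real (\<Sum>a\<in>S. cmod (f a) ^ 2) = (\<Sum>a\<in>S. f a * cnj (f a))"
  by (simp only: of_real_sum cmod_sq_cnj)

lemma CS_complex:
  fixes p q :: "'a \<Rightarrow> complex"
  assumes "finite S"
  shows "cmod (\<Sum>a\<in>S. p a * cnj (q a)) ^ 2 \<le> (\<Sum>a\<in>S. cmod (p a) ^ 2) * (\<Sum>a\<in>S. cmod (q a) ^ 2)"
proof -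
  let ?Y = "\<lambda>a b. p a * q b"
  let ?s = "\<Sum>a\<in>S. p a * cnj (q a)"
  have "cmod ?s ^ 2 = Re (?s * cnj ?s)"
    by (simp only: cmod_sq_cnj[symmetric] Re_complex_of_real)
  also have "?s * cnj ?s = (\<Sum>a\<in>S. \<Sum>b\<in>S. ?Y a b * cnj (?Y b a))"
    by (simp add: sum_product ac_simps)
  also have "Re \<dots> \<le> (\<Sum>a\<in>S. \<Sum>b\<in>S. cmod (?Y a b) ^ 2)"
    by (rule Y_lemma[OF assms])
  also have "\<dots> = (\<Sum>a\<in>S. cmod (p a) ^ 2) * (\<Sum>a\<in>S. cmod (q a) ^ 2)"
    by (simp add: sum_product norm_mult power_mult_distrib)
  finally show ?thesis .
qed

lemma two_prod_lhs:
  fixes P Q R S :: "'a \<Rightarrow> complex"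
  shows "(\<Sum>a\<in>T. \<Sum>b\<in>T. (P a * Q b + R a * S b) * cnj (P b * Q a + R b * S a)) =
    (\<Sum>a\<in>T. P a * cnj (Q a)) * (\<Sum>b\<in>T. Q b * cnj (P b)) + (\<Sum>a\<in>T. P a * cnj (S a)) * (\<Sum>b\<in>T. Q b * cnj (R b))
    + (\<Sum>a\<in>T. R a * cnj (Q a)) * (\<Sum>b\<in>T. S b * cnj (P b)) + (\<Sum>a\<in>T. R a * cnj (S a)) * (\<Sum>b\<in>T. S b * cnj (R b))"
  by (simp add: sum_product sum.distrib[symmetric] algebra_simps)

lemma cmod_add_sq: "cmod (z + w) ^ 2 = cmod z ^ 2 + cmod w ^ 2 + 2 * Re (z * cnj w)"
proof -
  have "complex_of_real (cmod (z + w) ^ 2) = (z+w) * cnj (z+w)" by (rule cmod_sq_cnj)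
  also have "\<dots> = z * cnj z + w * cnj w + (z * cnj w + cnj (z * cnj w))" by (simp add: algebra_simps)
  also have "\<dots> = complex_of_real (cmod z ^ 2 + cmod w ^ 2 + 2 * Re (z * cnj w))"
    by (simp only: cmod_sq_cnj[symmetric] complex_add_cnj of_real_add of_real_mult)
  finally show ?thesis by (simp only: of_real_eq_iff)
qed

lemma two_prod_rhs:
  fixes P Q R S :: "'a \<Rightarrow> complex"
  assumes "finite T"
  shows "(\<Sum>a\<in>T. \<Sum>b\<in>T. cmod (P a * Q b + R a * S b) ^ 2) =
    (\<Sum>a\<in>T. cmod (P a) ^ 2) * (\<Sum>b\<in>T. cmod (Q b) ^ 2) + (\<Sum>a\<in>T. cmod (R a) ^ 2) * (\<Sum>b\<in>T. cmod (S b) ^ 2)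
    + 2 * Re ((\<Sum>a\<in>T. P a * cnj (R a)) * (\<Sum>b\<in>T. Q b * cnj (S b)))"
proof -
  have "(\<Sum>a\<in>T. \<Sum>b\<in>T. cmod (P a * Q b + R a * S b) ^ 2) =
     (\<Sum>a\<in>T. \<Sum>b\<in>T. cmod (P a) ^ 2 * cmod (Q b) ^ 2 + cmod (R a) ^ 2 * cmod (S b) ^ 2 + 2 * Re ((P a * cnj (R a)) * (Q b * cnj (S b))))"
    by (intro sum.cong refl) (simp add: cmod_add_sq norm_mult power_mult_distrib ac_simps)
  also have "\<dots> = (\<Sum>a\<in>T. \<Sum>b\<in>T. cmod (P a) ^ 2 * cmod (Q b) ^ 2) + (\<Sum>a\<in>T. \<Sum>b\<in>T. cmod (R a) ^ 2 * cmod (S b) ^ 2) + (\<Sum>a\<in>T. \<Sum>b\<in>T. 2 * Re ((P a * cnj (R a)) * (Q b * cnj (S b))))"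
    by (simp only: sum.distrib)
  also have "(\<Sum>a\<in>T. \<Sum>b\<in>T. cmod (P a) ^ 2 * cmod (Q b) ^ 2) = (\<Sum>a\<in>T. cmod (P a) ^ 2) * (\<Sum>b\<in>T. cmod (Q b) ^ 2)"
    by (simp only: sum_product)
  also have "(\<Sum>a\<in>T. \<Sum>b\<in>T. cmod (R a) ^ 2 * cmod (S b) ^ 2) = (\<Sum>a\<in>T. cmod (R a) ^ 2) * (\<Sum>b\<in>T. cmod (S b) ^ 2)"
    by (simp only: sum_product)
  also have "(\<Sum>a\<in>T. \<Sum>b\<in>T. 2 * Re ((P a * cnj (R a)) * (Q b * cnj (S b)))) = 2 * Re ((\<Sum>a\<in>T. P a * cnj (R a)) * (\<Sum>b\<in>T. Q b * cnj (S b)))"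
  proof -
    have "(\<Sum>a\<in>T. P a * cnj (R a)) * (\<Sum>b\<in>T. Q b * cnj (S b)) = (\<Sum>a\<in>T. \<Sum>b\<in>T. (P a * cnj (R a)) * (Q b * cnj (S b)))"
      by (rule sum_product)
    then have "Re ((\<Sum>a\<in>T. P a * cnj (R a)) * (\<Sum>b\<in>T. Q b * cnj (S b))) = (\<Sum>a\<in>T. \<Sum>b\<in>T. Re ((P a * cnj (R a)) * (Q b * cnj (S b))))"
      by (simp only: Re_sum)
    then show ?thesis by (simp only: sum_distrib_left)
  qed
  finally show ?thesis .
qed

lemma per_m_ineq:
  fixes x c :: real and n :: real
  assumes "0 < x" "x < 1" "0 \<le> c" "c \<le> 1"
  shows "2*x*c + n*x^2 + (1-x^2)*(1-c^2) \<le> 1 + (n+1)*x^2 - x^2*(1-x)^2/4"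
proof -
  have key: "(c-x)^2 + x^2*(1-c^2) \<ge> x^2*(1-x)^2/4"
  proof (cases "\<bar>c - x\<bar> \<ge> x*(1-x)/2")
    case True
    then have "(c-x)^2 \<ge> (x*(1-x)/2)^2" using assms
      by (metis abs_ge_zero abs_le_square_iff abs_of_nonneg mult_nonneg_nonneg divide_nonneg_pos
          less_eq_real_def diff_ge_0_iff_ge zero_less_numeral)
    moreover have "x^2*(1-c^2) \<ge> 0" using assms by (simp add: power_le_one)
    ultimately show ?thesis by (simp add: power_mult_distrib power_divide)
  next
    case False
    then have "\<bar>c - x\<bar> < x*(1-x)/2" by linarith
    then have "c < x + x*(1-x)/2" using abs_ge_self[of "c-x"] by linarith
    moreover have "x + x*(1-x)/2 \<le> 1 - (1-x)/2"
    proof -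
      have "x + x*(1-x)/2 = 1 - (1-x)/2 - (1-x)*(1-x)/2" by (simp add: field_simps)
      moreover have "0 \<le> (1-x)*(1-x)" by simp
      ultimately show ?thesis by linarith
    qed
    ultimately have "1 - c \<ge> (1-x)/2" by linarith
    moreover have "(1-c)*(1+c) \<ge> (1-c)*1" using assms by (intro mult_left_mono) auto
    moreover have "1 - c^2 = (1-c)*(1+c)" by (simp add: power2_eq_square algebra_simps)
    ultimately have "1 - c^2 \<ge> (1-x)/2" by (smt (verit))
    then have "x^2*(1-c^2) \<ge> x^2*((1-x)/2)" using assms by (intro mult_left_mono) auto
    moreover have "x^2*((1-x)/2) \<ge> x^2*(1-x)^2/4"
    proof -
      have "(1-x)*(1-x) \<le> (1-x)*2" using assms by (intro mult_left_mono) auto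
      then have "(1-x)^2/4 \<le> (1-x)/2" by (simp add: power2_eq_square)
      then have "x^2*((1-x)^2/4) \<le> x^2*((1-x)/2)" by (intro mult_left_mono) auto
      then show ?thesis by simp
    qed
    moreover have "(c-x)^2 \<ge> 0" by simp
    ultimately show ?thesis by linarith
  qed
  have "1 + (n+1)*x^2 - (2*x*c + n*x^2 + (1-x^2)*(1-c^2)) = (c-x)^2 + x^2*(1-c^2)"
    by (simp add: power2_eq_square algebra_simps)
  then show ?thesis using key by linarith
qed


lemma sum_cnj_mult_real: "(\<Sum>b\<in>S. cnj (f b) * f b) = complex_of_real (\<Sum>b\<in>S. cmod (f b) ^ 2)"
proof -
  have "(\<Sum>b\<in>S. cnj (f b) * f b) = (\<Sum>b\<in>S. f b * cnj (f b))" by (simp add: mult.commute)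
  also have "\<dots> = complex_of_real (\<Sum>b\<in>S. cmod (f b) ^ 2)" by (rule sum_cmod_sq_complex[symmetric])
  finally show ?thesis .
qed

lemma sum3: fixes a :: "'k \<Rightarrow> real" shows "(\<Sum>k\<in>K. a k + (\<Sum>m\<in>I. b k m) + (\<Sum>m\<in>I. c k m)) = (\<Sum>k\<in>K. a k) + (\<Sum>m\<in>I. (\<Sum>k\<in>K. b k m) + (\<Sum>k\<in>K. c k m))"
proof -
  have "(\<Sum>k\<in>K. a k + (\<Sum>m\<in>I. b k m) + (\<Sum>m\<in>I. c k m)) = (\<Sum>k\<in>K. a k) + (\<Sum>k\<in>K. \<Sum>m\<in>I. b k m) + (\<Sum>k\<in>K. \<Sum>m\<in>I. c k m)"
    by (simp only: sum.distrib)
  also have "(\<Sum>k\<in>K. \<Sum>m\<in>I. b k m) = (\<Sum>m\<in>I. \<Sum>k\<in>K. b k m)" by (rule sum.swap)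
  also have "(\<Sum>k\<in>K. \<Sum>m\<in>I. c k m) = (\<Sum>m\<in>I. \<Sum>k\<in>K. c k m)" by (rule sum.swap)
  finally show ?thesis by (simp only: sum.distrib add.assoc)
qed

lemma main_est:
  fixes L d :: nat and x :: "nat \<Rightarrow> real" and Ap Bp :: "nat \<Rightarrow> nat \<Rightarrow> nat \<Rightarrow> complex"
  assumes d2: "d \<ge> 2" and xr: "\<forall>m\<in>{1..<d}. 0 < x m \<and> x m < 1"
    and C: "\<forall>l<d. \<forall>l'<d. \<forall>j<d. \<forall>j'<d. (\<Sum>k<L. (\<Sum>b<d. cnj (Ap k b l) * Ap k b l') * (\<Sum>b<d. cnj (Bp k b j) * Bp k b j'))
       = (if l = l' \<and> j = j' then 1 else 0)"
  shows "(\<Sum>k<L. cmod ((\<Sum>b<d. Bp k b 0 * Ap k b 0) + (\<Sum>m\<in>{1..<d}. complex_of_real (x m) * (\<Sum>b<d. Bp k b m * Ap k b m))) ^ 2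
     + (\<Sum>m\<in>{1..<d}. (1 - x m ^ 2) * cmod (\<Sum>b<d. Bp k b 0 * Ap k b m) ^ 2))
     \<le> 1 + (\<Sum>m\<in>{1..<d}. 1 + real d * x m ^ 2 - x m ^ 2 * (1 - x m) ^ 2 / 4)"
proof -
  define G where "G k j l = (\<Sum>b<d. Bp k b j * Ap k b l)" for k j l
  define I where "I = {1..<d}"
  have finI: "finite I" unfolding I_def by simp
  have cardI: "card I = d - 1" unfolding I_def by simp
  have I0: "0 \<notin> I" and Ilt: "\<And>m. m \<in> I \<Longrightarrow> m < d" unfolding I_def by auto
  have Creal: "(\<Sum>k<L. (\<Sum>b<d. cmod (Ap k b l) ^ 2) * (\<Sum>b<d. cmod (Bp k b j) ^ 2)) = 1" if "l < d" "j < d" for l j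
  proof -
    have "complex_of_real (\<Sum>k<L. (\<Sum>b<d. cmod (Ap k b l) ^ 2) * (\<Sum>b<d. cmod (Bp k b j) ^ 2))
       = (\<Sum>k<L. (\<Sum>b<d. cnj (Ap k b l) * Ap k b l) * (\<Sum>b<d. cnj (Bp k b j) * Bp k b j))"
      by (simp add: sum_cnj_mult_real)
    also have "\<dots> = 1" using C that by auto
    finally show ?thesis by (simp only: of_real_eq_1_iff)
  qed
  have F1: "(\<Sum>k<L. cmod (G k j j) ^ 2) \<le> 1" if j: "j < d" for j
  proof -
    have "(\<Sum>k<L. cmod (G k j j) ^ 2) \<le> (\<Sum>k<L. (\<Sum>b<d. cmod (Ap k b j) ^ 2) * (\<Sum>b<d. cmod (cnj (Bp k b j)) ^ 2))"
    proof (rule sum_mono)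
      fix k
      have "G k j j = (\<Sum>b<d. Ap k b j * cnj (cnj (Bp k b j)))" by (simp add: G_def mult.commute)
      then show "cmod (G k j j) ^ 2 \<le> (\<Sum>b<d. cmod (Ap k b j) ^ 2) * (\<Sum>b<d. cmod (cnj (Bp k b j)) ^ 2)"
        using CS_complex[of "{..<d}" "\<lambda>b. Ap k b j" "\<lambda>b. cnj (Bp k b j)"] by simp
    qed
    also have "\<dots> = 1" using Creal[OF j j] by simp
    finally show ?thesis .
  qed
  define g where "g m = (\<Sum>k<L. cnj (G k 0 0) * G k m m)" for m
  have F2: "(\<Sum>k<L. cmod (G k 0 m) ^ 2) \<le> 1 - cmod (g m) ^ 2" if m: "m \<in> I" for m
  proof -
    have md: "m < d" "m \<noteq> 0" using Ilt[OF m] apply simp using m I0 by metis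
    have d0: "0 < d" using d2 by auto
    let ?g = "g m"
    define P where "P k a = Ap k a m" for k a
    define Q where "Q k b = cnj (Bp k b 0)" for k b
    define R where "R k a = ?g * Ap k a 0" for k a
    define S where "S k b = cnj (Bp k b m)" for k b
    let ?L = "\<lambda>k. (\<Sum>a<d. \<Sum>b<d. (P k a * Q k b + R k a * S k b) * cnj (P k b * Q k a + R k b * S k a))"
    let ?R = "\<lambda>k. (\<Sum>a<d. \<Sum>b<d. cmod (P k a * Q k b + R k a * S k b) ^ 2)"
    have YL: "Re (?L k) \<le> ?R k" for k
      using Y_lemma[of "{..<d}" "\<lambda>a b. P k a * Q k b + R k a * S k b"] by simp
    have Lk: "?L k = G k 0 m * cnj (G k 0 m) + cnj ?g * (G k m m * cnj (G k 0 0)) + ?g * (G k 0 0 * cnj (G k m m))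
       + (?g * G k m 0) * cnj (?g * G k m 0)" for k
    proof -
      have e1: "(\<Sum>a<d. P k a * cnj (Q k a)) = G k 0 m" by (simp add: P_def Q_def G_def mult.commute)
      have e2: "(\<Sum>b<d. Q k b * cnj (P k b)) = cnj (G k 0 m)" by (simp add: P_def Q_def G_def mult.commute)
      have e3: "(\<Sum>a<d. P k a * cnj (S k a)) = G k m m" by (simp add: P_def S_def G_def mult.commute)
      have e4: "(\<Sum>b<d. Q k b * cnj (R k b)) = cnj ?g * cnj (G k 0 0)" by (simp add: Q_def R_def G_def sum_distrib_left ac_simps)
      have e5: "(\<Sum>a<d. R k a * cnj (Q k a)) = ?g * G k 0 0" by (simp add: Q_def R_def G_def sum_distrib_left ac_simps)
      have e6: "(\<Sum>b<d. S k b * cnj (P k b)) = cnj (G k m m)" by (simp add: P_def S_def G_def mult.commute)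
      have e7: "(\<Sum>a<d. R k a * cnj (S k a)) = ?g * G k m 0" by (simp add: R_def S_def G_def sum_distrib_left ac_simps)
      have e8: "(\<Sum>b<d. S k b * cnj (R k b)) = cnj (?g * G k m 0)" by (simp add: R_def S_def G_def sum_distrib_left ac_simps)
      show ?thesis unfolding two_prod_lhs e1 e2 e3 e4 e5 e6 e7 e8 by (simp add: ac_simps)
    qed
    have Rk: "?R k = (\<Sum>a<d. cmod (Ap k a m) ^ 2) * (\<Sum>b<d. cmod (Bp k b 0) ^ 2)
        + cmod ?g ^ 2 * ((\<Sum>a<d. cmod (Ap k a 0) ^ 2) * (\<Sum>b<d. cmod (Bp k b m) ^ 2))
        + 2 * Re (cnj ?g * ((\<Sum>a<d. cnj (Ap k a 0) * Ap k a m) * (\<Sum>b<d. cnj (Bp k b 0) * Bp k b m)))" for k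
    proof -
      have r1: "(\<Sum>a<d. cmod (R k a) ^ 2) = cmod ?g ^ 2 * (\<Sum>a<d. cmod (Ap k a 0) ^ 2)"
        by (simp add: R_def norm_mult power_mult_distrib sum_distrib_left)
      have r2: "(\<Sum>a<d. P k a * cnj (R k a)) * (\<Sum>b<d. Q k b * cnj (S k b)) =
          cnj ?g * ((\<Sum>a<d. cnj (Ap k a 0) * Ap k a m) * (\<Sum>b<d. cnj (Bp k b 0) * Bp k b m))"
      proof -
        have "(\<Sum>a<d. P k a * cnj (R k a)) = cnj ?g * (\<Sum>a<d. cnj (Ap k a 0) * Ap k a m)"
          by (simp add: P_def R_def sum_distrib_left ac_simps)
        moreover have "(\<Sum>b<d. Q k b * cnj (S k b)) = (\<Sum>b<d. cnj (Bp k b 0) * Bp k b m)"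
          by (simp add: Q_def S_def)
        ultimately show ?thesis by simp
      qed
      show ?thesis unfolding two_prod_rhs[OF finite_lessThan] r1 r2
        by (simp add: P_def Q_def S_def ac_simps)
    qed
    have sumL: "(\<Sum>k<L. ?L k) = complex_of_real ((\<Sum>k<L. cmod (G k 0 m) ^ 2) + 2 * cmod ?g ^ 2 + cmod ?g ^ 2 * (\<Sum>k<L. cmod (G k m 0) ^ 2))"
    proof -
      have s2: "(\<Sum>k<L. G k m m * cnj (G k 0 0)) = ?g" by (simp add: g_def mult.commute)
      have s3: "(\<Sum>k<L. G k 0 0 * cnj (G k m m)) = cnj ?g" by (simp add: g_def mult.commute)
      have "(\<Sum>k<L. ?L k) = (\<Sum>k<L. G k 0 m * cnj (G k 0 m)) + cnj ?g * (\<Sum>k<L. G k m m * cnj (G k 0 0))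
          + ?g * (\<Sum>k<L. G k 0 0 * cnj (G k m m)) + (?g * cnj ?g) * (\<Sum>k<L. G k m 0 * cnj (G k m 0))"
        unfolding Lk by (simp add: sum.distrib sum_distrib_left ac_simps)
      also have "\<dots> = complex_of_real ((\<Sum>k<L. cmod (G k 0 m) ^ 2) + 2 * cmod ?g ^ 2 + cmod ?g ^ 2 * (\<Sum>k<L. cmod (G k m 0) ^ 2))"
        unfolding s2 s3 by (simp add: sum_cmod_sq_complex[symmetric] cmod_sq_cnj[symmetric] ac_simps)
      finally show ?thesis .
    qed
    have sumR: "(\<Sum>k<L. ?R k) = 1 + cmod ?g ^ 2"
    proof -
      have z: "(\<Sum>k<L. (\<Sum>a<d. cnj (Ap k a 0) * Ap k a m) * (\<Sum>b<d. cnj (Bp k b 0) * Bp k b m)) = 0"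
        using C md d0 by auto
      have "(\<Sum>k<L. ?R k) = (\<Sum>k<L. (\<Sum>a<d. cmod (Ap k a m) ^ 2) * (\<Sum>b<d. cmod (Bp k b 0) ^ 2))
        + cmod ?g ^ 2 * (\<Sum>k<L. (\<Sum>a<d. cmod (Ap k a 0) ^ 2) * (\<Sum>b<d. cmod (Bp k b m) ^ 2))
        + 2 * Re (cnj ?g * (\<Sum>k<L. (\<Sum>a<d. cnj (Ap k a 0) * Ap k a m) * (\<Sum>b<d. cnj (Bp k b 0) * Bp k b m)))"
        unfolding Rk by (simp add: sum.distrib sum_distrib_left Re_sum)
      also have "\<dots> = 1 + cmod ?g ^ 2" unfolding z using Creal[of m 0] Creal[of 0 m] md d0 by simp
      finally show ?thesis .
    qed
    have "Re (\<Sum>k<L. ?L k) \<le> (\<Sum>k<L. ?R k)"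
    proof -
      have "Re (\<Sum>k<L. ?L k) = (\<Sum>k<L. Re (?L k))" by (rule Re_sum)
      also have "\<dots> \<le> (\<Sum>k<L. ?R k)" by (intro sum_mono YL)
      finally show ?thesis .
    qed
    then have "(\<Sum>k<L. cmod (G k 0 m) ^ 2) + 2 * cmod ?g ^ 2 + cmod ?g ^ 2 * (\<Sum>k<L. cmod (G k m 0) ^ 2) \<le> 1 + cmod ?g ^ 2"
      unfolding sumL sumR by simp
    moreover have "cmod ?g ^ 2 * (\<Sum>k<L. cmod (G k m 0) ^ 2) \<ge> 0" by (simp add: sum_nonneg)
    ultimately show ?thesis by linarith
  qed
  have cle1: "cmod (g m) \<le> 1" if "m \<in> I" for m
  proof -
    have "0 \<le> (\<Sum>k<L. cmod (G k 0 m) ^ 2)" by (simp add: sum_nonneg)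
    then have "cmod (g m) ^ 2 \<le> 1" using F2[OF that] by linarith
    then show ?thesis by (simp add: power_le_one_iff)
  qed
  define n where "n = real (d - 1)"
  have npos: "n > 0" and nd: "real d = n + 1" using d2 unfolding n_def by auto
  have cardIn: "real (card I) = n" using cardI n_def by simp
  have P1: "cmod (G k 0 0 + (\<Sum>m\<in>I. complex_of_real (x m) * G k m m)) ^ 2 \<le>
      cmod (G k 0 0) ^ 2 + (\<Sum>m\<in>I. n * x m ^ 2 * cmod (G k m m) ^ 2 + 2 * x m * Re (G k 0 0 * cnj (G k m m)))" for k
  proof -
    define z where "z m = G k 0 0 / complex_of_real n + complex_of_real (x m) * G k m m" for m
    have "(\<Sum>m\<in>I. G k 0 0 / complex_of_real n) = of_nat (card I) * (G k 0 0 / complex_of_real n)" by simp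
    also have "complex_of_nat (card I) = complex_of_real n" using cardIn by (metis of_real_of_nat_eq)
    also have "complex_of_real n * (G k 0 0 / complex_of_real n) = G k 0 0" using npos by simp
    finally have sz: "(\<Sum>m\<in>I. z m) = G k 0 0 + (\<Sum>m\<in>I. complex_of_real (x m) * G k m m)"
      unfolding z_def by (simp add: sum.distrib)
    have "cmod (\<Sum>m\<in>I. z m) ^ 2 = cmod (\<Sum>m\<in>I. z m * cnj 1) ^ 2" by simp
    also have "\<dots> \<le> (\<Sum>m\<in>I. cmod (z m) ^ 2) * (\<Sum>m\<in>I. cmod (1::complex) ^ 2)"
      by (rule CS_complex[OF finI])
    also have "\<dots> = n * (\<Sum>m\<in>I. cmod (z m) ^ 2)" using cardIn by simp
    also have "\<dots> = n * (\<Sum>m\<in>I. cmod (G k 0 0) ^ 2 / n ^ 2 + (x m ^ 2 * cmod (G k m m) ^ 2 + 2 * x m * Re (G k 0 0 * cnj (G k m m)) / n))"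
    proof -
      have "cmod (z m) ^ 2 = cmod (G k 0 0) ^ 2 / n ^ 2 + (x m ^ 2 * cmod (G k m m) ^ 2 + 2 * x m * Re (G k 0 0 * cnj (G k m m)) / n)" for m
      proof -
        have "cmod (z m) ^ 2 = cmod (G k 0 0 / complex_of_real n) ^ 2 + cmod (complex_of_real (x m) * G k m m) ^ 2
            + 2 * Re (G k 0 0 / complex_of_real n * cnj (complex_of_real (x m) * G k m m))"
          unfolding z_def by (rule cmod_add_sq)
        also have "Re (G k 0 0 / complex_of_real n * cnj (complex_of_real (x m) * G k m m)) = x m / n * Re (G k 0 0 * cnj (G k m m))"
        proof -
          have "G k 0 0 / complex_of_real n * cnj (complex_of_real (x m) * G k m m) = complex_of_real (x m / n) * (G k 0 0 * cnj (G k m m))"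
            by (simp add: field_simps)
          then show ?thesis by (simp add: algebra_simps add_divide_distrib)
        qed
        also have "cmod (G k 0 0 / complex_of_real n) ^ 2 = cmod (G k 0 0) ^ 2 / n ^ 2"
          using npos by (simp add: norm_divide power_divide)
        also have "cmod (complex_of_real (x m) * G k m m) ^ 2 = x m ^ 2 * cmod (G k m m) ^ 2"
          by (simp add: norm_mult power_mult_distrib)
        finally show ?thesis using npos by (simp add: field_simps)
      qed
      then show ?thesis by simp
    qed
    also have "\<dots> = cmod (G k 0 0) ^ 2 + (\<Sum>m\<in>I. n * x m ^ 2 * cmod (G k m m) ^ 2 + 2 * x m * Re (G k 0 0 * cnj (G k m m)))"
    proof -
      have "(\<Sum>m\<in>I. cmod (G k 0 0) ^ 2 / n ^ 2 + (x m ^ 2 * cmod (G k m m) ^ 2 + 2 * x m * Re (G k 0 0 * cnj (G k m m)) / n))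
          = real (card I) * (cmod (G k 0 0) ^ 2 / n ^ 2) + (\<Sum>m\<in>I. x m ^ 2 * cmod (G k m m) ^ 2 + 2 * x m * Re (G k 0 0 * cnj (G k m m)) / n)"
        by (simp add: sum.distrib)
      also have "real (card I) = n" by (rule cardIn)
      finally have e: "n * (\<Sum>m\<in>I. cmod (G k 0 0) ^ 2 / n ^ 2 + (x m ^ 2 * cmod (G k m m) ^ 2 + 2 * x m * Re (G k 0 0 * cnj (G k m m)) / n))
          = n * (n * (cmod (G k 0 0) ^ 2 / n ^ 2)) + (\<Sum>m\<in>I. n * (x m ^ 2 * cmod (G k m m) ^ 2 + 2 * x m * Re (G k 0 0 * cnj (G k m m)) / n))"
        by (simp add: distrib_left sum_distrib_left)
      have e2: "n * (n * (cmod (G k 0 0) ^ 2 / n ^ 2)) = cmod (G k 0 0) ^ 2" using npos by (simp add: power2_eq_square)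
      have e3: "n * (x m ^ 2 * cmod (G k m m) ^ 2 + 2 * x m * Re (G k 0 0 * cnj (G k m m)) / n) = n * x m ^ 2 * cmod (G k m m) ^ 2 + 2 * x m * Re (G k 0 0 * cnj (G k m m))" for m
        using npos by (simp add: field_simps)
      show ?thesis unfolding e e2 e3 ..
    qed
    finally show ?thesis unfolding sz .
  qed
  have "(\<Sum>k<L. cmod (G k 0 0 + (\<Sum>m\<in>I. complex_of_real (x m) * G k m m)) ^ 2 + (\<Sum>m\<in>I. (1 - x m ^ 2) * cmod (G k 0 m) ^ 2))
     \<le> (\<Sum>k<L. cmod (G k 0 0) ^ 2 + (\<Sum>m\<in>I. n * x m ^ 2 * cmod (G k m m) ^ 2 + 2 * x m * Re (G k 0 0 * cnj (G k m m))) + (\<Sum>m\<in>I. (1 - x m ^ 2) * cmod (G k 0 m) ^ 2))"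
    by (intro sum_mono add_right_mono P1)
  also have "\<dots> = (\<Sum>k<L. cmod (G k 0 0) ^ 2) + (\<Sum>m\<in>I. n * x m ^ 2 * (\<Sum>k<L. cmod (G k m m) ^ 2) + 2 * x m * Re (\<Sum>k<L. G k 0 0 * cnj (G k m m))
        + (1 - x m ^ 2) * (\<Sum>k<L. cmod (G k 0 m) ^ 2))"
    unfolding sum3 by (simp add: sum.distrib sum_distrib_left[symmetric] Re_sum[symmetric] mult.assoc)
  also have "\<dots> \<le> 1 + (\<Sum>m\<in>I. n * x m ^ 2 + 2 * x m * cmod (g m) + (1 - x m ^ 2) * (1 - cmod (g m) ^ 2))"
  proof (rule add_mono)
    show "(\<Sum>k<L. cmod (G k 0 0) ^ 2) \<le> 1" using F1[of 0] d2 by simp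
  next
    show "(\<Sum>m\<in>I. n * x m ^ 2 * (\<Sum>k<L. cmod (G k m m) ^ 2) + 2 * x m * Re (\<Sum>k<L. G k 0 0 * cnj (G k m m))
        + (1 - x m ^ 2) * (\<Sum>k<L. cmod (G k 0 m) ^ 2)) \<le> (\<Sum>m\<in>I. n * x m ^ 2 + 2 * x m * cmod (g m) + (1 - x m ^ 2) * (1 - cmod (g m) ^ 2))"
    proof (rule sum_mono)
    fix m assume m: "m \<in> I"
    have xm: "0 < x m" "x m < 1" using xr m unfolding I_def by auto
    have a1: "n * x m ^ 2 * (\<Sum>k<L. cmod (G k m m) ^ 2) \<le> n * x m ^ 2"
      using F1[OF Ilt[OF m]] npos by (simp add: mult_left_le)
    have "(\<Sum>k<L. G k 0 0 * cnj (G k m m)) = cnj (g m)" by (simp add: g_def mult.commute)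
    then have "Re (\<Sum>k<L. G k 0 0 * cnj (G k m m)) \<le> cmod (g m)" using complex_Re_le_cmod[of "cnj (g m)"] by simp
    then have a2: "2 * x m * Re (\<Sum>k<L. G k 0 0 * cnj (G k m m)) \<le> 2 * x m * cmod (g m)"
      using xm by (intro mult_left_mono) auto
    have "x m ^ 2 \<le> 1" using xm by (simp add: power_le_one)
    then have a3: "(1 - x m ^ 2) * (\<Sum>k<L. cmod (G k 0 m) ^ 2) \<le> (1 - x m ^ 2) * (1 - cmod (g m) ^ 2)"
      using F2[OF m] by (intro mult_left_mono) auto
    show "n * x m ^ 2 * (\<Sum>k<L. cmod (G k m m) ^ 2) + 2 * x m * Re (\<Sum>k<L. G k 0 0 * cnj (G k m m))
        + (1 - x m ^ 2) * (\<Sum>k<L. cmod (G k 0 m) ^ 2) \<le> n * x m ^ 2 + 2 * x m * cmod (g m) + (1 - x m ^ 2) * (1 - cmod (g m) ^ 2)"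
      using a1 a2 a3 by linarith
  qed
  qed
  also have "\<dots> \<le> 1 + (\<Sum>m\<in>I. 1 + real d * x m ^ 2 - x m ^ 2 * (1 - x m) ^ 2 / 4)"
  proof (rule add_left_mono, rule sum_mono)
    fix m assume m: "m \<in> I"
    have xm: "0 < x m" "x m < 1" using xr m unfolding I_def by auto
    show "n * x m ^ 2 + 2 * x m * cmod (g m) + (1 - x m ^ 2) * (1 - cmod (g m) ^ 2) \<le> 1 + real d * x m ^ 2 - x m ^ 2 * (1 - x m) ^ 2 / 4"
      using per_m_ineq[OF xm norm_ge_zero cle1[OF m], of n] unfolding nd by (simp add: ac_simps)
  qed
  finally show ?thesis unfolding G_def I_def .
qed


definition ip :: "complex vec \<Rightarrow> complex vec \<Rightarrow> complex" where
  "ip u w = (\<Sum>i<dim_vec u. cnj (u$i) * w$i)"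

definition kbs :: "nat \<Rightarrow> complex vec list \<Rightarrow> complex mat \<Rightarrow> bool" where
  "kbs m ys R \<longleftrightarrow> R \<in> carrier_mat m m \<and> (\<forall>y\<in>set ys. dim_vec y = m) \<and>
     (\<forall>i<m. \<forall>j<m. R$$(i,j) = sum_list (map (\<lambda>y. y$i * cnj (y$j)) ys))"

lemma KRK_entry:
  assumes K: "K \<in> carrier_mat n m" and R: "kbs m ys R" and ij: "i < n" "j < n"
  shows "(K * R * adj K)$$(i,j) = sum_list (map (\<lambda>y. (K *\<^sub>v y)$i * cnj ((K *\<^sub>v y)$j)) ys)"
proof -
  have Rc: "R \<in> carrier_mat m m" and ys: "\<forall>y\<in>set ys. dim_vec y = m"
    and Re: "\<forall>i<m. \<forall>j<m. R$$(i,j) = sum_list (map (\<lambda>y. y$i * cnj (y$j)) ys)"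
    using R unfolding kbs_def by auto
  have "(K * R * adj K)$$(i,j) = (\<Sum>t<m. (K*R)$$(i,t) * adj K $$ (t,j))"
    using K Rc ij by (subst mult_entry) auto
  also have "\<dots> = (\<Sum>t<m. (\<Sum>s<m. K$$(i,s) * R$$(s,t)) * cnj (K$$(j,t)))"
    using K Rc ij by (intro sum.cong refl) (simp add: mult_entry del: index_mult_mat(1))
  also have "\<dots> = (\<Sum>t<m. \<Sum>s<m. sum_list (map (\<lambda>y. K$$(i,s) * y$s * (cnj (K$$(j,t)) * cnj (y$t))) ys))"
  proof (rule sum.cong[OF refl])
    fix t assume t: "t \<in> {..<m}"
    have "(\<Sum>s<m. K$$(i,s) * R$$(s,t)) * cnj (K$$(j,t)) = (\<Sum>s<m. K$$(i,s) * R$$(s,t) * cnj (K$$(j,t)))"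
      by (simp add: sum_distrib_right)
    also have "\<dots> = (\<Sum>s<m. sum_list (map (\<lambda>y. K$$(i,s) * y$s * (cnj (K$$(j,t)) * cnj (y$t))) ys))"
    proof (rule sum.cong[OF refl])
      fix s assume s: "s \<in> {..<m}"
      show "K$$(i,s) * R$$(s,t) * cnj (K$$(j,t)) = sum_list (map (\<lambda>y. K$$(i,s) * y$s * (cnj (K$$(j,t)) * cnj (y$t))) ys)"
        using Re s t by (simp add: sum_list_const_mult[symmetric] sum_list_mult_const[symmetric] ac_simps)
    qed
    finally show "(\<Sum>s<m. K$$(i,s) * R$$(s,t)) * cnj (K$$(j,t)) = (\<Sum>s<m. sum_list (map (\<lambda>y. K$$(i,s) * y$s * (cnj (K$$(j,t)) * cnj (y$t))) ys))" .
  qed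
  also have "\<dots> = sum_list (map (\<lambda>y. \<Sum>t<m. \<Sum>s<m. K$$(i,s) * y$s * (cnj (K$$(j,t)) * cnj (y$t))) ys)"
    by (simp add: sl_sum_swap)
  also have "\<dots> = sum_list (map (\<lambda>y. (K *\<^sub>v y)$i * cnj ((K *\<^sub>v y)$j)) ys)"
  proof (rule sl_cong)
    fix y assume "y \<in> set ys"
    then have dy: "dim_vec y = m" using ys by auto
    have "(K *\<^sub>v y)$i * cnj ((K *\<^sub>v y)$j) = (\<Sum>s<m. K$$(i,s) * y$s) * cnj (\<Sum>t<m. K$$(j,t) * y$t)"
      using K dy ij by (simp add: mult_vec_entry del: index_mult_mat_vec)
    also have "\<dots> = (\<Sum>s<m. \<Sum>t<m. K$$(i,s) * y$s * (cnj (K$$(j,t)) * cnj (y$t)))"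
      by (simp add: sum_product)
    also have "\<dots> = (\<Sum>t<m. \<Sum>s<m. K$$(i,s) * y$s * (cnj (K$$(j,t)) * cnj (y$t)))"
      by (rule sum.swap)
    finally show "(\<Sum>t<m. \<Sum>s<m. K$$(i,s) * y$s * (cnj (K$$(j,t)) * cnj (y$t))) = (K *\<^sub>v y)$i * cnj ((K *\<^sub>v y)$j)" ..
  qed
  finally show ?thesis .
qed

lemma apply_kraus_kbs:
  assumes Ks: "\<forall>K\<in>set Ks. K \<in> carrier_mat n m" and R: "kbs m ys R"
  shows "kbs n (concat (map (\<lambda>K. map (\<lambda>y. K *\<^sub>v y) ys) Ks)) (apply_kraus n Ks R)"
  using Ks
proof (induction Ks)
  case Nil then show ?case by (auto simp: kbs_def apply_kraus_def)
next
  case (Cons K Ks)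
  then have K: "K \<in> carrier_mat n m" and IH: "kbs n (concat (map (\<lambda>K. map (\<lambda>y. K *\<^sub>v y) ys) Ks)) (apply_kraus n Ks R)" by auto
  have Rc: "R \<in> carrier_mat m m" using R unfolding kbs_def by auto
  have AK: "apply_kraus n (K#Ks) R = K * R * adj K + apply_kraus n Ks R" by (simp add: apply_kraus_def)
  have c: "apply_kraus n Ks R \<in> carrier_mat n n" using IH unfolding kbs_def by auto
  show ?case unfolding kbs_def
  proof (intro conjI allI impI)
    show "apply_kraus n (K#Ks) R \<in> carrier_mat n n" using c K Rc unfolding AK by auto
    show "\<forall>y\<in>set (concat (map (\<lambda>K. map (\<lambda>y. K *\<^sub>v y) ys) (K#Ks))). dim_vec y = n"
      using IH K unfolding kbs_def by auto
    fix i j assume ij: "i < n" "j < n"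
    have "apply_kraus n (K#Ks) R $$ (i,j) = (K * R * adj K) $$ (i,j) + apply_kraus n Ks R $$ (i,j)"
      unfolding AK using c ij by simp
    also have "\<dots> = sum_list (map (\<lambda>y. y$i * cnj (y$j)) (map (\<lambda>y. K *\<^sub>v y) ys)) + sum_list (map (\<lambda>y. y$i * cnj (y$j)) (concat (map (\<lambda>K. map (\<lambda>y. K *\<^sub>v y) ys) Ks)))"
      using KRK_entry[OF K R ij] IH ij unfolding kbs_def by (simp add: o_def)
    finally show "apply_kraus n (K#Ks) R $$ (i,j) = sum_list (map (\<lambda>y. y$i * cnj (y$j)) (concat (map (\<lambda>K. map (\<lambda>y. K *\<^sub>v y) ys) (K#Ks))))"
      by simp
  qed
qed

lemma ket_bra_kbs: "kbs (dim_vec v) [v] (ket_bra v)"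
  by (auto simp: kbs_def ket_bra_def)

lemma Re_sum_list: "Re (sum_list xs) = sum_list (map Re xs)"
  by (induction xs) auto

lemma expect_kbs:
  assumes R: "kbs m ys R" and dP: "dim_vec \<Phi> = m"
  shows "expect \<Phi> R = sum_list (map (\<lambda>y. cmod (ip \<Phi> y) ^ 2) ys)"
proof -
  have Rc: "R \<in> carrier_mat m m" and ys: "\<forall>y\<in>set ys. dim_vec y = m"
    and Re: "\<forall>i<m. \<forall>j<m. R$$(i,j) = sum_list (map (\<lambda>y. y$i * cnj (y$j)) ys)"
    using R unfolding kbs_def by auto
  have "(\<Sum>i<dim_vec \<Phi>. cnj (\<Phi> $ i) * (R *\<^sub>v \<Phi>) $ i) = (\<Sum>i<m. cnj (\<Phi> $ i) * (\<Sum>j<m. R$$(i,j) * \<Phi>$j))"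
  proof (rule sum.cong)
    show "{..<dim_vec \<Phi>} = {..<m}" using dP by simp
  next
    fix x assume "x \<in> {..<m}"
    then show "cnj (\<Phi> $ x) * (R *\<^sub>v \<Phi>) $ x = cnj (\<Phi> $ x) * (\<Sum>j<m. R$$(x,j) * \<Phi>$j)"
      using Rc dP by (subst mult_vec_entry) auto
  qed
  also have "\<dots> = (\<Sum>i<m. \<Sum>j<m. sum_list (map (\<lambda>y. (cnj (\<Phi> $ i) * y$i) * (\<Phi>$j * cnj (y$j))) ys))"
  proof (rule sum.cong[OF refl])
    fix i assume i: "i \<in> {..<m}"
    have "cnj (\<Phi> $ i) * (\<Sum>j<m. R$$(i,j) * \<Phi>$j) = (\<Sum>j<m. cnj (\<Phi> $ i) * R$$(i,j) * \<Phi>$j)"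
      by (simp add: sum_distrib_left mult.assoc)
    also have "\<dots> = (\<Sum>j<m. sum_list (map (\<lambda>y. (cnj (\<Phi> $ i) * y$i) * (\<Phi>$j * cnj (y$j))) ys))"
    proof (rule sum.cong[OF refl])
      fix j assume j: "j \<in> {..<m}"
      show "cnj (\<Phi> $ i) * R$$(i,j) * \<Phi>$j = sum_list (map (\<lambda>y. (cnj (\<Phi> $ i) * y$i) * (\<Phi>$j * cnj (y$j))) ys)"
        using Re i j by (simp add: sum_list_const_mult[symmetric] sum_list_mult_const[symmetric] ac_simps)
    qed
    finally show "cnj (\<Phi> $ i) * (\<Sum>j<m. R$$(i,j) * \<Phi>$j) = (\<Sum>j<m. sum_list (map (\<lambda>y. (cnj (\<Phi> $ i) * y$i) * (\<Phi>$j * cnj (y$j))) ys))" .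
  qed
  also have "\<dots> = sum_list (map (\<lambda>y. \<Sum>i<m. \<Sum>j<m. (cnj (\<Phi> $ i) * y$i) * (\<Phi>$j * cnj (y$j))) ys)"
    by (simp add: sl_sum_swap)
  also have "\<dots> = sum_list (map (\<lambda>y. complex_of_real (cmod (ip \<Phi> y) ^ 2)) ys)"
  proof (rule sl_cong)
    fix y
    have "complex_of_real (cmod (ip \<Phi> y) ^ 2) = ip \<Phi> y * cnj (ip \<Phi> y)" by (rule cmod_sq_cnj)
    also have "\<dots> = (\<Sum>i<m. \<Sum>j<m. (cnj (\<Phi> $ i) * y$i) * (\<Phi>$j * cnj (y$j)))"
      unfolding ip_def dP by (simp add: sum_product)
    finally show "(\<Sum>i<m. \<Sum>j<m. (cnj (\<Phi> $ i) * y$i) * (\<Phi>$j * cnj (y$j))) = complex_of_real (cmod (ip \<Phi> y) ^ 2)" ..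
  qed
  finally show ?thesis unfolding expect_def by (simp add: Re_sum_list o_def)
qed


lemma sl_upt: "sum_list (map f [0..<n]) = (\<Sum>m<n. f m)"
  by (induction n) auto

lemma kron_mult_vec:
  assumes A: "A \<in> carrier_mat p q" and B: "B \<in> carrier_mat r s" and w: "dim_vec w = q*s"
    and a: "a < p" and b: "b < r"
  shows "(kron A B *\<^sub>v w) $ (a*r+b) = (\<Sum>i<q. \<Sum>j<s. A$$(a,i) * B$$(b,j) * w$(i*s+j))"
proof -
  have "(kron A B *\<^sub>v w) $ (a*r+b) = (\<Sum>c<q*s. kron A B $$ (a*r+b, c) * w$c)"
    using A B w a b by (subst mult_vec_entry) (auto simp: idx_lt)
  also have "\<dots> = (\<Sum>i<q. \<Sum>j<s. kron A B $$ (a*r+b, i*s+j) * w$(i*s+j))"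
    by (rule sum_split_prod)
  also have "\<dots> = (\<Sum>i<q. \<Sum>j<s. A$$(a,i) * B$$(b,j) * w$(i*s+j))"
  proof (intro sum.cong refl)
    fix i j assume "i \<in> {..<q}" "j \<in> {..<s}"
    then show "kron A B $$ (a*r+b, i*s+j) * w$(i*s+j) = A$$(a,i) * B$$(b,j) * w$(i*s+j)"
      using A B a b kron_idx[of a A b B i j] by auto
  qed
  finally show ?thesis .
qed

lemma kron1_vec:
  assumes Am: "Am \<in> carrier_mat d d" and w: "dim_vec w = d*d" and i: "i < d" and j: "j < d"
  shows "(kron (1\<^sub>m d) Am *\<^sub>v w) $ (i*d+j) = (\<Sum>l<d. Am$$(j,l) * w$(i*d+l))"
proof -
  have "(kron (1\<^sub>m d) Am *\<^sub>v w) $ (i*d+j) = (\<Sum>i'<d. \<Sum>l<d. (1\<^sub>m d)$$(i,i') * Am$$(j,l) * w$(i'*d+l))"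
    using kron_mult_vec[OF one_carrier_mat Am w i j] .
  also have "\<dots> = (\<Sum>i'<d. if i' = i then (\<Sum>l<d. Am$$(j,l) * w$(i*d+l)) else 0)"
    using i by (intro sum.cong refl) auto
  also have "\<dots> = (\<Sum>l<d. Am$$(j,l) * w$(i*d+l))" using i by simp
  finally show ?thesis .
qed

lemma ip_formula:
  assumes A: "A \<in> carrier_mat d d" and B: "B \<in> carrier_mat d d" and Am: "Am \<in> carrier_mat d d"
    and dP': "dim_vec \<Phi>' = d*d" and dP: "dim_vec \<Phi> = d*d"
  shows "ip \<Phi>' (kron A B *\<^sub>v (kron (1\<^sub>m d) Am *\<^sub>v \<Phi>)) =
    (\<Sum>j<d. \<Sum>l<d. Am$$(j,l) * (\<Sum>b<d. B$$(b,j) * (\<Sum>a<d. \<Sum>i<d. cnj (\<Phi>'$(a*d+b)) * A$$(a,i) * \<Phi>$(i*d+l))))"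
proof -
  let ?w = "kron (1\<^sub>m d) Am *\<^sub>v \<Phi>"
  have dw: "dim_vec ?w = d*d" using dP Am by simp
  let ?X = "\<lambda>a b i j l. cnj (\<Phi>'$(a*d+b)) * (A$$(a,i) * B$$(b,j) * (Am$$(j,l) * \<Phi>$(i*d+l)))"
  have "ip \<Phi>' (kron A B *\<^sub>v ?w) = (\<Sum>r<d*d. cnj (\<Phi>'$r) * (kron A B *\<^sub>v ?w)$r)"
    unfolding ip_def dP' ..
  also have "\<dots> = (\<Sum>a<d. \<Sum>b<d. cnj (\<Phi>'$(a*d+b)) * (kron A B *\<^sub>v ?w)$(a*d+b))"
    by (rule sum_split_prod)
  also have "\<dots> = (\<Sum>a<d. \<Sum>b<d. \<Sum>i<d. \<Sum>j<d. \<Sum>l<d. ?X a b i j l)"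
  proof (intro sum.cong refl)
    fix a b assume ab: "a \<in> {..<d}" "b \<in> {..<d}"
    have "(kron A B *\<^sub>v ?w)$(a*d+b) = (\<Sum>i<d. \<Sum>j<d. A$$(a,i) * B$$(b,j) * ?w$(i*d+j))"
      using kron_mult_vec[OF A B dw] ab by auto
    also have "\<dots> = (\<Sum>i<d. \<Sum>j<d. A$$(a,i) * B$$(b,j) * (\<Sum>l<d. Am$$(j,l) * \<Phi>$(i*d+l)))"
      using kron1_vec[OF Am dP] by (intro sum.cong refl) auto
    finally show "cnj (\<Phi>'$(a*d+b)) * (kron A B *\<^sub>v ?w)$(a*d+b) = (\<Sum>i<d. \<Sum>j<d. \<Sum>l<d. ?X a b i j l)"
      by (simp add: sum_distrib_left)
  qed
  also have "\<dots> = (\<Sum>a<d. \<Sum>b<d. \<Sum>j<d. \<Sum>i<d. \<Sum>l<d. ?X a b i j l)"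
    by (rule sum.cong[OF refl], rule sum.cong[OF refl], rule sum.swap)
  also have "\<dots> = (\<Sum>a<d. \<Sum>b<d. \<Sum>j<d. \<Sum>l<d. \<Sum>i<d. ?X a b i j l)"
    by (rule sum.cong[OF refl], rule sum.cong[OF refl], rule sum.cong[OF refl], rule sum.swap)
  also have "\<dots> = (\<Sum>a<d. \<Sum>j<d. \<Sum>b<d. \<Sum>l<d. \<Sum>i<d. ?X a b i j l)"
    by (rule sum.cong[OF refl], rule sum.swap)
  also have "\<dots> = (\<Sum>a<d. \<Sum>j<d. \<Sum>l<d. \<Sum>b<d. \<Sum>i<d. ?X a b i j l)"
    by (rule sum.cong[OF refl], rule sum.cong[OF refl], rule sum.swap)
  also have "\<dots> = (\<Sum>j<d. \<Sum>a<d. \<Sum>l<d. \<Sum>b<d. \<Sum>i<d. ?X a b i j l)"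
    by (rule sum.swap)
  also have "\<dots> = (\<Sum>j<d. \<Sum>l<d. \<Sum>a<d. \<Sum>b<d. \<Sum>i<d. ?X a b i j l)"
    by (rule sum.cong[OF refl], rule sum.swap)
  also have "\<dots> = (\<Sum>j<d. \<Sum>l<d. \<Sum>b<d. \<Sum>a<d. \<Sum>i<d. ?X a b i j l)"
    by (rule sum.cong[OF refl], rule sum.cong[OF refl], rule sum.swap)
  also have "\<dots> = (\<Sum>j<d. \<Sum>l<d. Am$$(j,l) * (\<Sum>b<d. B$$(b,j) * (\<Sum>a<d. \<Sum>i<d. cnj (\<Phi>'$(a*d+b)) * A$$(a,i) * \<Phi>$(i*d+l))))"
    by (simp add: sum_distrib_left ac_simps)
  finally show ?thesis .
qed


lemma compl_transfer:
  fixes d L :: nat and fA fB :: "nat \<Rightarrow> nat \<Rightarrow> nat \<Rightarrow> complex" and \<Phi> \<Phi>' :: "complex vec"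
  assumes d0: "d > 0"
    and CAB: "\<forall>i<d. \<forall>i'<d. \<forall>j<d. \<forall>j'<d. (\<Sum>k<L. (\<Sum>a<d. cnj (fA k a i) * fA k a i') * (\<Sum>b<d. cnj (fB k b j) * fB k b j'))
       = (if i = i' \<and> j = j' then 1 else 0)"
    and rowP': "\<forall>a<d. \<forall>a'<d. (\<Sum>b<d. \<Phi>'$(a*d+b) * cnj (\<Phi>'$(a'*d+b))) = (if a = a' then 1 / of_nat d else 0)"
    and colP: "\<forall>l<d. \<forall>l'<d. (\<Sum>i<d. cnj (\<Phi>$(i*d+l)) * \<Phi>$(i*d+l')) = (if l = l' then 1 / of_nat d else 0)"
  defines "Ap \<equiv> \<lambda>k b l. of_nat d * (\<Sum>a<d. cnj (\<Phi>'$(a*d+b)) * (\<Sum>i<d. fA k a i * \<Phi>$(i*d+l)))"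
  shows "\<forall>l<d. \<forall>l'<d. \<forall>j<d. \<forall>j'<d. (\<Sum>k<L. (\<Sum>b<d. cnj (Ap k b l) * Ap k b l') * (\<Sum>b<d. cnj (fB k b j) * fB k b j'))
       = (if l = l' \<and> j = j' then 1 else 0)"
proof (intro allI impI)
  fix l l' j j' assume l: "l < d" and l': "l' < d" and j: "j < d" and j': "j' < d"
  define Cm where "Cm k a l = (\<Sum>i<d. fA k a i * \<Phi>$(i*d+l))" for k a l
  define gA where "gA k i i' = (\<Sum>a<d. cnj (fA k a i) * fA k a i')" for k i i'
  have dd: "complex_of_nat d \<noteq> 0" using d0 by simp
  have s3: "(\<Sum>a<d. cnj (Cm k a l) * Cm k a l') = (\<Sum>i<d. \<Sum>i'<d. cnj (\<Phi>$(i*d+l)) * \<Phi>$(i'*d+l') * gA k i i')" for k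
  proof -
    have "(\<Sum>a<d. cnj (Cm k a l) * Cm k a l') = (\<Sum>a<d. \<Sum>i<d. \<Sum>i'<d. cnj (\<Phi>$(i*d+l)) * \<Phi>$(i'*d+l') * (cnj (fA k a i) * fA k a i'))"
    proof (rule sum.cong[OF refl])
      fix a
      have "cnj (Cm k a l) * Cm k a l' = (\<Sum>i<d. \<Sum>i'<d. cnj (fA k a i * \<Phi>$(i*d+l)) * (fA k a i' * \<Phi>$(i'*d+l')))"
        unfolding Cm_def by (simp only: cnj_sum sum_product)
      also have "\<dots> = (\<Sum>i<d. \<Sum>i'<d. cnj (\<Phi>$(i*d+l)) * \<Phi>$(i'*d+l') * (cnj (fA k a i) * fA k a i'))"
        by (intro sum.cong refl) (simp add: ac_simps)
      finally show "cnj (Cm k a l) * Cm k a l' = (\<Sum>i<d. \<Sum>i'<d. cnj (\<Phi>$(i*d+l)) * \<Phi>$(i'*d+l') * (cnj (fA k a i) * fA k a i'))" .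
    qed
    also have "\<dots> = (\<Sum>i<d. \<Sum>a<d. \<Sum>i'<d. cnj (\<Phi>$(i*d+l)) * \<Phi>$(i'*d+l') * (cnj (fA k a i) * fA k a i'))"
      by (rule sum.swap)
    also have "\<dots> = (\<Sum>i<d. \<Sum>i'<d. \<Sum>a<d. cnj (\<Phi>$(i*d+l)) * \<Phi>$(i'*d+l') * (cnj (fA k a i) * fA k a i'))"
      by (rule sum.cong[OF refl], rule sum.swap)
    also have "\<dots> = (\<Sum>i<d. \<Sum>i'<d. cnj (\<Phi>$(i*d+l)) * \<Phi>$(i'*d+l') * gA k i i')"
      unfolding gA_def by (simp add: sum_distrib_left)
    finally show ?thesis .
  qed
  have s2: "(\<Sum>b<d. cnj (Ap k b l) * Ap k b l') = of_nat d * (\<Sum>a<d. cnj (Cm k a l) * Cm k a l')" for k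
  proof -
    have "(\<Sum>b<d. cnj (Ap k b l) * Ap k b l') = of_nat d * of_nat d * (\<Sum>b<d. \<Sum>a<d. \<Sum>a'<d. (\<Phi>'$(a*d+b) * cnj (\<Phi>'$(a'*d+b))) * (cnj (Cm k a l) * Cm k a' l'))"
      unfolding Ap_def Cm_def[symmetric] by (simp add: sum_product sum_distrib_left ac_simps)
    also have "(\<Sum>b<d. \<Sum>a<d. \<Sum>a'<d. (\<Phi>'$(a*d+b) * cnj (\<Phi>'$(a'*d+b))) * (cnj (Cm k a l) * Cm k a' l'))
        = (\<Sum>a<d. \<Sum>a'<d. \<Sum>b<d. (\<Phi>'$(a*d+b) * cnj (\<Phi>'$(a'*d+b))) * (cnj (Cm k a l) * Cm k a' l'))"
      by (subst sum.swap, rule sum.cong[OF refl], rule sum.swap)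
    also have "\<dots> = (\<Sum>a<d. \<Sum>a'<d. (if a = a' then 1 / of_nat d else 0) * (cnj (Cm k a l) * Cm k a' l'))"
      using rowP' by (simp add: sum_distrib_right[symmetric])
    also have "\<dots> = (\<Sum>a<d. 1 / of_nat d * (cnj (Cm k a l) * Cm k a l'))"
    proof (rule sum.cong[OF refl])
      fix a assume a: "a \<in> {..<d}"
      have "(\<Sum>a'<d. (if a = a' then 1 / of_nat d else 0) * (cnj (Cm k a l) * Cm k a' l')) = (\<Sum>a'<d. if a = a' then 1 / of_nat d * (cnj (Cm k a l) * Cm k a' l') else 0)"
        by (intro sum.cong) auto
      also have "\<dots> = 1 / of_nat d * (cnj (Cm k a l) * Cm k a l')" using a by (simp add: sum.delta)
      finally show "(\<Sum>a'<d. (if a = a' then 1 / of_nat d else 0) * (cnj (Cm k a l) * Cm k a' l')) = 1 / of_nat d * (cnj (Cm k a l) * Cm k a l')" .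
    qed
    also have "(\<Sum>a<d. 1 / of_nat d * (cnj (Cm k a l) * Cm k a l')) = 1 / of_nat d * (\<Sum>a<d. cnj (Cm k a l) * Cm k a l')"
      by (simp only: sum_distrib_left)
    finally show ?thesis using dd by simp
  qed
  have "(\<Sum>k<L. (\<Sum>b<d. cnj (Ap k b l) * Ap k b l') * (\<Sum>b<d. cnj (fB k b j) * fB k b j'))
     = (\<Sum>k<L. \<Sum>i<d. \<Sum>i'<d. of_nat d * (cnj (\<Phi>$(i*d+l)) * \<Phi>$(i'*d+l')) * (gA k i i' * (\<Sum>b<d. cnj (fB k b j) * fB k b j')))"
    unfolding s2 s3 by (simp add: sum_distrib_left sum_distrib_right ac_simps)
  also have "\<dots> = (\<Sum>i<d. \<Sum>i'<d. of_nat d * (cnj (\<Phi>$(i*d+l)) * \<Phi>$(i'*d+l')) * (\<Sum>k<L. gA k i i' * (\<Sum>b<d. cnj (fB k b j) * fB k b j')))"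
    by (subst sum.swap, rule sum.cong[OF refl], subst sum.swap) (simp add: sum_distrib_left)
  also have "\<dots> = (\<Sum>i<d. \<Sum>i'<d. of_nat d * (cnj (\<Phi>$(i*d+l)) * \<Phi>$(i'*d+l')) * (if i = i' \<and> j = j' then 1 else 0))"
    using CAB j j' unfolding gA_def by (intro sum.cong refl) auto
  also have "\<dots> = (if j = j' then of_nat d * (\<Sum>i<d. cnj (\<Phi>$(i*d+l)) * \<Phi>$(i*d+l')) else 0)"
  proof -
    have "(\<Sum>i<d. \<Sum>i'<d. of_nat d * (cnj (\<Phi>$(i*d+l)) * \<Phi>$(i'*d+l')) * (if i = i' \<and> j = j' then 1 else 0))
       = (\<Sum>i<d. if j = j' then of_nat d * (cnj (\<Phi>$(i*d+l)) * \<Phi>$(i*d+l')) else 0)"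
    proof (rule sum.cong[OF refl])
      fix i assume i: "i \<in> {..<d}"
      have "(\<Sum>i'<d. of_nat d * (cnj (\<Phi>$(i*d+l)) * \<Phi>$(i'*d+l')) * (if i = i' \<and> j = j' then 1 else 0))
          = (\<Sum>i'<d. if i = i' then (if j = j' then of_nat d * (cnj (\<Phi>$(i*d+l)) * \<Phi>$(i'*d+l')) else 0) else 0)"
        by (intro sum.cong) auto
      also have "\<dots> = (if j = j' then of_nat d * (cnj (\<Phi>$(i*d+l)) * \<Phi>$(i*d+l')) else 0)"
        using i by (simp add: sum.delta)
      finally show "(\<Sum>i'<d. of_nat d * (cnj (\<Phi>$(i*d+l)) * \<Phi>$(i'*d+l')) * (if i = i' \<and> j = j' then 1 else 0))
          = (if j = j' then of_nat d * (cnj (\<Phi>$(i*d+l)) * \<Phi>$(i*d+l')) else 0)" .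
    qed
    also have "\<dots> = (if j = j' then of_nat d * (\<Sum>i<d. cnj (\<Phi>$(i*d+l)) * \<Phi>$(i*d+l')) else 0)"
      by (simp add: sum_distrib_left)
    finally show ?thesis .
  qed
  also have "\<dots> = (if l = l' \<and> j = j' then 1 else 0)"
    using colP l l' dd by auto
  finally show "(\<Sum>k<L. (\<Sum>b<d. cnj (Ap k b l) * Ap k b l') * (\<Sum>b<d. cnj (fB k b j) * fB k b j')) = (if l = l' \<and> j = j' then 1 else 0)" .
qed


lemma max_ent_basic: "max_ent d \<Phi> \<Longrightarrow> dim_vec \<Phi> = d*d \<and> (\<Sum>i<d*d. cmod (\<Phi>$i) ^ 2) = 1"
  unfolding max_ent_def is_unit_vec_def by auto

lemma max_ent_rows:
  assumes "max_ent d \<Phi>" and i: "i < d" and k: "k < d"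
  shows "(\<Sum>j<d. \<Phi>$(i*d+j) * cnj (\<Phi>$(k*d+j))) = (if i = k then 1 / of_nat d else 0)"
proof -
  have dP: "dim_vec \<Phi> = d*d" and eq: "ptrace_B d d (ket_bra \<Phi>) = (1 / of_nat d) \<cdot>\<^sub>m (1\<^sub>m d)"
    using assms unfolding max_ent_def is_unit_vec_def by auto
  have "ptrace_B d d (ket_bra \<Phi>) $$ (i,k) = (\<Sum>j<d. \<Phi>$(i*d+j) * cnj (\<Phi>$(k*d+j)))"
    using i k dP by (auto simp: ptrace_B_def ket_bra_def idx_lt intro!: sum.cong)
  moreover have "((1 / (of_nat d :: complex)) \<cdot>\<^sub>m (1\<^sub>m d)) $$ (i,k) = (if i = k then 1 / of_nat d else 0)"
    using i k by simp
  ultimately show ?thesis using eq by simp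
qed

lemma max_ent_cols:
  assumes me: "max_ent d \<Phi>" and j: "j < d" and l: "l < d"
  shows "(\<Sum>i<d. cnj (\<Phi>$(i*d+j)) * \<Phi>$(i*d+l)) = (if j = l then 1 / of_nat d else 0)"
proof -
  define A where "A = mat d d (\<lambda>(i,j). of_nat d * \<Phi>$(i*d+j))"
  define B where "B = mat d d (\<lambda>(j,k). cnj (\<Phi>$(k*d+j)))"
  have d0: "d > 0" using j by auto
  have cA: "A \<in> carrier_mat d d" and cB: "B \<in> carrier_mat d d" unfolding A_def B_def by auto
  have AB: "A * B = 1\<^sub>m d"
  proof (rule eq_matI)
    fix i k assume "i < dim_row (1\<^sub>m d)" "k < dim_col (1\<^sub>m d)"
    then have ik: "i < d" "k < d" by auto
    have "(A * B) $$ (i,k) = (\<Sum>j<d. of_nat d * \<Phi>$(i*d+j) * cnj (\<Phi>$(k*d+j)))"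
      using ik cA cB by (subst mult_entry) (auto simp: A_def B_def)
    also have "\<dots> = of_nat d * (\<Sum>j<d. \<Phi>$(i*d+j) * cnj (\<Phi>$(k*d+j)))"
      by (simp add: sum_distrib_left mult.assoc)
    also have "\<dots> = (1\<^sub>m d) $$ (i,k)" using max_ent_rows[OF me ik] ik d0 by simp
    finally show "(A * B) $$ (i,k) = (1\<^sub>m d) $$ (i,k)" .
  qed (use cA cB in auto)
  have BA: "B * A = 1\<^sub>m d" by (rule mat_mult_left_right_inverse[OF cA cB AB])
  have "(B * A) $$ (j,l) = (\<Sum>i<d. cnj (\<Phi>$(i*d+j)) * (of_nat d * \<Phi>$(i*d+l)))"
    using j l cA cB by (subst mult_entry) (auto simp: A_def B_def)
  also have "\<dots> = of_nat d * (\<Sum>i<d. cnj (\<Phi>$(i*d+j)) * \<Phi>$(i*d+l))"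
    by (simp add: sum_distrib_left ac_simps)
  finally have e0: "(B * A) $$ (j,l) = of_nat d * (\<Sum>i<d. cnj (\<Phi>$(i*d+j)) * \<Phi>$(i*d+l))" .
  have "(B * A) $$ (j,l) = (if j = l then 1 else 0)"
    using BA j l by (simp only: index_one_mat)
  then have e: "of_nat d * (\<Sum>i<d. cnj (\<Phi>$(i*d+j)) * \<Phi>$(i*d+l)) = (if j = l then 1 else 0)" using e0 by simp
  have dnz: "(of_nat d :: complex) \<noteq> 0" using d0 by simp
  have "(\<Sum>i<d. cnj (\<Phi>$(i*d+j)) * \<Phi>$(i*d+l)) = of_nat d * (\<Sum>i<d. cnj (\<Phi>$(i*d+j)) * \<Phi>$(i*d+l)) / of_nat d"
    using dnz by simp
  also have "\<dots> = (if j = l then 1 else 0) / of_nat d" unfolding e ..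
  finally show ?thesis by simp
qed

lemma kraus_carrier: "kraus_A d x m \<in> carrier_mat d d"
  by (simp add: kraus_A_def)

lemma omega_carrier: "\<forall>A\<in>set (Omega_kraus d x). A \<in> carrier_mat d d"
  by (auto simp: Omega_kraus_def kraus_carrier)

lemma kraus0_idx: "j < d \<Longrightarrow> l < d \<Longrightarrow> kraus_A d x 0 $$ (j,l) = (if j = l then (if j = 0 then 1 else complex_of_real (x j)) else 0)"
  by (simp add: kraus_A_def)

lemma krausm_idx: "m \<noteq> 0 \<Longrightarrow> j < d \<Longrightarrow> l < d \<Longrightarrow> kraus_A d x m $$ (j,l) = (if j = 0 \<and> l = m then complex_of_real (sqrt (1 - x m ^ 2)) else 0)"
  by (simp add: kraus_A_def)

lemma sum_lessThan_0_split: "(0::nat) < d \<Longrightarrow> (\<Sum>j<d. f j) = f 0 + (\<Sum>j\<in>{1..<d}. f j)"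
proof -
  assume "0 < d"
  have "{..<d} = insert 0 {1..<d}"
  proof (intro equalityI subsetI)
    fix j assume "j \<in> {..<d}"
    then have "j < d" by simp
    moreover have "j = 0 \<or> 1 \<le> j" by arith
    ultimately show "j \<in> insert 0 {1..<d}" by auto
  qed (use \<open>0 < d\<close> in auto)
  then show ?thesis by simp
qed

lemma kraus0_sum:
  assumes d0: "0 < d"
  shows "(\<Sum>j<d. \<Sum>l<d. kraus_A d x 0 $$ (j,l) * H j l) = H 0 0 + (\<Sum>m\<in>{1..<d}. complex_of_real (x m) * H m m)"
proof -
  have "(\<Sum>j<d. \<Sum>l<d. kraus_A d x 0 $$ (j,l) * H j l) = (\<Sum>j<d. (if j = 0 then 1 else complex_of_real (x j)) * H j j)"
  proof (rule sum.cong[OF refl])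
    fix j assume j: "j \<in> {..<d}"
    have "(\<Sum>l<d. kraus_A d x 0 $$ (j,l) * H j l) = (\<Sum>l<d. if j = l then (if j = 0 then 1 else complex_of_real (x j)) * H j l else 0)"
      using j by (intro sum.cong refl) (auto simp: kraus0_idx)
    also have "\<dots> = (if j = 0 then 1 else complex_of_real (x j)) * H j j" using j by (simp add: sum.delta)
    finally show "(\<Sum>l<d. kraus_A d x 0 $$ (j,l) * H j l) = (if j = 0 then 1 else complex_of_real (x j)) * H j j" .
  qed
  also have "\<dots> = H 0 0 + (\<Sum>m\<in>{1..<d}. complex_of_real (x m) * H m m)"
    using d0 by (subst sum_lessThan_0_split) auto
  finally show ?thesis .
qed

lemma krausm_sum:
  assumes m: "m \<in> {1..<d}"
  shows "(\<Sum>j<d. \<Sum>l<d. kraus_A d x m $$ (j,l) * H j l) = complex_of_real (sqrt (1 - x m ^ 2)) * H 0 m"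
proof -
  have m0: "m \<noteq> 0" "m < d" using m by auto
  have "(\<Sum>j<d. \<Sum>l<d. kraus_A d x m $$ (j,l) * H j l) = (\<Sum>j<d. if j = 0 then complex_of_real (sqrt (1 - x m ^ 2)) * H 0 m else 0)"
  proof (rule sum.cong[OF refl])
    fix j assume j: "j \<in> {..<d}"
    have "(\<Sum>l<d. kraus_A d x m $$ (j,l) * H j l) = (\<Sum>l<d. if l = m then (if j = 0 then complex_of_real (sqrt (1 - x m ^ 2)) * H j l else 0) else 0)"
      using j m0 by (intro sum.cong refl) (auto simp: krausm_idx)
    also have "\<dots> = (if j = 0 then complex_of_real (sqrt (1 - x m ^ 2)) * H 0 m else 0)" using m0 by (simp add: sum.delta')
    finally show "(\<Sum>l<d. kraus_A d x m $$ (j,l) * H j l) = (if j = 0 then complex_of_real (sqrt (1 - x m ^ 2)) * H 0 m else 0)" .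
  qed
  also have "\<dots> = complex_of_real (sqrt (1 - x m ^ 2)) * H 0 m" using m0 by (simp add: sum.delta')
  finally show ?thesis .
qed

lemma expect_formula:
  assumes Ks: "\<forall>K\<in>set Ks. K \<in> carrier_mat (d*d) (d*d)" and As: "\<forall>A\<in>set As. A \<in> carrier_mat d d"
    and dP: "dim_vec \<Phi> = d*d" and dP': "dim_vec \<Phi>' = d*d"
  shows "expect \<Phi>' (apply_kraus (d*d) Ks (rho_out d As \<Phi>)) =
     sum_list (map (\<lambda>K. sum_list (map (\<lambda>A. cmod (ip \<Phi>' (K *\<^sub>v (kron (1\<^sub>m d) A *\<^sub>v \<Phi>))) ^ 2) As)) Ks)"
proof -
  have k1: "kbs (d*d) [\<Phi>] (ket_bra \<Phi>)" using ket_bra_kbs[of \<Phi>] unfolding dP .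
  have cL: "\<forall>L\<in>set (map (kron (1\<^sub>m d)) As). L \<in> carrier_mat (d*d) (d*d)"
  proof
    fix L assume "L \<in> set (map (kron (1\<^sub>m d)) As)"
    then obtain A where A: "A \<in> set As" and L: "L = kron (1\<^sub>m d) A" by auto
    have "A \<in> carrier_mat d d" using A As by auto
    then show "L \<in> carrier_mat (d*d) (d*d)" unfolding L carrier_mat_def by simp
  qed
  have e1: "concat (map (\<lambda>K. map (\<lambda>y. K *\<^sub>v y) [\<Phi>]) (map (kron (1\<^sub>m d)) As)) = map (\<lambda>A. kron (1\<^sub>m d) A *\<^sub>v \<Phi>) As"
    by (induction As) auto
  have e2: "rho_out d As \<Phi> = apply_kraus (d*d) (map (kron (1\<^sub>m d)) As) (ket_bra \<Phi>)"
    unfolding rho_out_def ..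
  have k2: "kbs (d*d) (map (\<lambda>A. kron (1\<^sub>m d) A *\<^sub>v \<Phi>) As) (rho_out d As \<Phi>)"
    using apply_kraus_kbs[OF cL k1] unfolding e1 e2 .
  have k3: "kbs (d*d) (concat (map (\<lambda>K. map (\<lambda>y. K *\<^sub>v y) (map (\<lambda>A. kron (1\<^sub>m d) A *\<^sub>v \<Phi>) As)) Ks)) (apply_kraus (d*d) Ks (rho_out d As \<Phi>))"
    by (rule apply_kraus_kbs[OF Ks k2])
  show ?thesis using expect_kbs[OF k3 dP'] by (simp add: sl_concat o_def)
qed

lemma sl_omega: "sum_list (map f (Omega_kraus d x)) = (\<Sum>m<d. f (kraus_A d x m))"
  unfolding Omega_kraus_def by (simp add: sl_upt o_def)


lemma term_formula:
  assumes A: "A \<in> carrier_mat d d" and B: "B \<in> carrier_mat d d" and d0: "0 < d"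
    and dP': "dim_vec \<Phi>' = d*d" and dP: "dim_vec \<Phi> = d*d"
    and xr: "\<forall>m\<in>{1..<d}. 0 < x m \<and> x m < 1"
  defines "H \<equiv> \<lambda>j l. (\<Sum>b<d. B$$(b,j) * (\<Sum>a<d. \<Sum>i<d. cnj (\<Phi>'$(a*d+b)) * A$$(a,i) * \<Phi>$(i*d+l)))"
  shows "(\<Sum>m<d. cmod (ip \<Phi>' (kron A B *\<^sub>v (kron (1\<^sub>m d) (kraus_A d x m) *\<^sub>v \<Phi>))) ^ 2)
     = cmod (H 0 0 + (\<Sum>m\<in>{1..<d}. complex_of_real (x m) * H m m)) ^ 2 + (\<Sum>m\<in>{1..<d}. (1 - x m ^ 2) * cmod (H 0 m) ^ 2)"
proof -
  have ipf: "ip \<Phi>' (kron A B *\<^sub>v (kron (1\<^sub>m d) (kraus_A d x m) *\<^sub>v \<Phi>)) = (\<Sum>j<d. \<Sum>l<d. kraus_A d x m $$ (j,l) * H j l)" for m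
    unfolding H_def by (rule ip_formula[OF A B kraus_carrier dP' dP])
  have "(\<Sum>m<d. cmod (ip \<Phi>' (kron A B *\<^sub>v (kron (1\<^sub>m d) (kraus_A d x m) *\<^sub>v \<Phi>))) ^ 2)
     = cmod (ip \<Phi>' (kron A B *\<^sub>v (kron (1\<^sub>m d) (kraus_A d x 0) *\<^sub>v \<Phi>))) ^ 2
       + (\<Sum>m\<in>{1..<d}. cmod (ip \<Phi>' (kron A B *\<^sub>v (kron (1\<^sub>m d) (kraus_A d x m) *\<^sub>v \<Phi>))) ^ 2)"
    by (rule sum_lessThan_0_split[OF d0])
  also have "cmod (ip \<Phi>' (kron A B *\<^sub>v (kron (1\<^sub>m d) (kraus_A d x 0) *\<^sub>v \<Phi>))) ^ 2 = cmod (H 0 0 + (\<Sum>m\<in>{1..<d}. complex_of_real (x m) * H m m)) ^ 2"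
    unfolding ipf kraus0_sum[OF d0] ..
  also have "(\<Sum>m\<in>{1..<d}. cmod (ip \<Phi>' (kron A B *\<^sub>v (kron (1\<^sub>m d) (kraus_A d x m) *\<^sub>v \<Phi>))) ^ 2) = (\<Sum>m\<in>{1..<d}. (1 - x m ^ 2) * cmod (H 0 m) ^ 2)"
  proof (rule sum.cong[OF refl])
    fix m assume m: "m \<in> {1..<d}"
    have "0 < x m" "x m < 1" using xr m by auto
    then have "x m ^ 2 \<le> 1" by (intro power_le_one) auto
    then have xm: "0 \<le> 1 - x m ^ 2" by simp
    have "cmod (ip \<Phi>' (kron A B *\<^sub>v (kron (1\<^sub>m d) (kraus_A d x m) *\<^sub>v \<Phi>))) ^ 2 = cmod (complex_of_real (sqrt (1 - x m ^ 2)) * H 0 m) ^ 2"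
      unfolding ipf krausm_sum[OF m] ..
    also have "\<dots> = (1 - x m ^ 2) * cmod (H 0 m) ^ 2"
      using xm by (simp add: norm_mult power_mult_distrib)
    finally show "cmod (ip \<Phi>' (kron A B *\<^sub>v (kron (1\<^sub>m d) (kraus_A d x m) *\<^sub>v \<Phi>))) ^ 2 = (1 - x m ^ 2) * cmod (H 0 m) ^ 2" .
  qed
  finally show ?thesis .
qed

lemma locc_bound:
  assumes d2: "d \<ge> 2" and xr: "\<forall>m\<in>{1..<d}. 0 < x m \<and> x m < 1"
    and LC: "LOCC_channel d Ks" and me: "max_ent d \<Phi>" and me': "max_ent d \<Phi>'"
  shows "expect \<Phi>' (apply_kraus (d*d) Ks (rho_out d (Omega_kraus d x) \<Phi>))
     \<le> (1 + (\<Sum>m\<in>{1..<d}. 1 + real d * x m ^ 2 - x m ^ 2 * (1 - x m) ^ 2 / 4)) / (real d)^2"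
proof -
  have d0: "0 < d" using d2 by auto
  obtain E where E: "LOCC_instr d d d d E" and KsE: "Ks = concat E" using LC unfolding LOCC_channel_def by auto
  have PF: "\<forall>K\<in>set Ks. prod_form d d d d K" and CP: "compl (d*d) Ks" using LOCC_props[OF E] KsE by auto
  have "\<forall>K\<in>set Ks. \<exists>AB. fst AB \<in> carrier_mat d d \<and> snd AB \<in> carrier_mat d d \<and> K = kron (fst AB) (snd AB)"
    using PF unfolding prod_form_def by fastforce
  then obtain f where f: "\<forall>K\<in>set Ks. fst (f K) \<in> carrier_mat d d \<and> snd (f K) \<in> carrier_mat d d \<and> K = kron (fst (f K)) (snd (f K))"
    by metis
  define L where "L = length Ks"
  define MA where "MA k = fst (f (Ks!k))" for k
  define MB where "MB k = snd (f (Ks!k))" for k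
  have MAB: "MA k \<in> carrier_mat d d" "MB k \<in> carrier_mat d d" "Ks!k = kron (MA k) (MB k)" if "k < L" for k
    using f nth_mem[of k Ks] that unfolding MA_def MB_def L_def by auto
  have cK: "\<forall>K\<in>set Ks. K \<in> carrier_mat (d*d) (d*d)" using PF prod_form_carrier by blast
  have dP: "dim_vec \<Phi> = d*d" and dP': "dim_vec \<Phi>' = d*d" using me me' unfolding max_ent_def is_unit_vec_def by auto
  define fA where "fA k a i = MA k $$ (a,i)" for k a i
  define fB where "fB k b j = MB k $$ (b,j)" for k b j
  have CAB: "\<forall>i<d. \<forall>i'<d. \<forall>j<d. \<forall>j'<d. (\<Sum>k<L. (\<Sum>a<d. cnj (fA k a i) * fA k a i') * (\<Sum>b<d. cnj (fB k b j) * fB k b j'))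
       = (if i = i' \<and> j = j' then 1 else 0)"
  proof (intro allI impI)
    fix i i' j j' assume ii: "i < d" "i' < d" "j < d" "j' < d"
    have "(\<Sum>k<L. (\<Sum>a<d. cnj (fA k a i) * fA k a i') * (\<Sum>b<d. cnj (fB k b j) * fB k b j'))
       = (\<Sum>k<L. gram (Ks!k) (i*d+j) (i'*d+j'))"
    proof (rule sum.cong[OF refl])
      fix k assume "k \<in> {..<L}"
      then have k: "k < L" by simp
      have "gram (Ks!k) (i*d+j) (i'*d+j') = gram (MA k) i i' * gram (MB k) j j'"
        unfolding MAB(3)[OF k] by (rule kron_gram[OF MAB(1,2)[OF k]]) (use ii in auto)
      also have "\<dots> = (\<Sum>a<d. cnj (fA k a i) * fA k a i') * (\<Sum>b<d. cnj (fB k b j) * fB k b j')"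
        using MAB(1,2)[OF k] unfolding gram_def fA_def fB_def by simp
      finally show "(\<Sum>a<d. cnj (fA k a i) * fA k a i') * (\<Sum>b<d. cnj (fB k b j) * fB k b j') = gram (Ks!k) (i*d+j) (i'*d+j')" ..
    qed
    also have "\<dots> = sum_list (map (\<lambda>K. gram K (i*d+j) (i'*d+j')) Ks)"
      unfolding L_def by (simp add: sum_list_sum_nth atLeast0LessThan)
    also have "\<dots> = (if i*d+j = i'*d+j' then 1 else 0)"
      using CP ii unfolding compl_def by (simp add: idx_lt)
    also have "\<dots> = (if i = i' \<and> j = j' then 1 else 0)" using ii by (simp add: idx_eq_iff)
    finally show "(\<Sum>k<L. (\<Sum>a<d. cnj (fA k a i) * fA k a i') * (\<Sum>b<d. cnj (fB k b j) * fB k b j')) = (if i = i' \<and> j = j' then 1 else 0)" .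
  qed
  define Ap where "Ap = (\<lambda>k b l. of_nat d * (\<Sum>a<d. cnj (\<Phi>'$(a*d+b)) * (\<Sum>i<d. fA k a i * \<Phi>$(i*d+l))))"
  have CC: "\<forall>l<d. \<forall>l'<d. \<forall>j<d. \<forall>j'<d. (\<Sum>k<L. (\<Sum>b<d. cnj (Ap k b l) * Ap k b l') * (\<Sum>b<d. cnj (fB k b j) * fB k b j'))
       = (if l = l' \<and> j = j' then 1 else 0)"
    unfolding Ap_def
    by (rule compl_transfer[OF d0 CAB]) (use max_ent_rows[OF me'] max_ent_cols[OF me] in auto)
  define H where "H k j l = (\<Sum>b<d. fB k b j * (\<Sum>a<d. \<Sum>i<d. cnj (\<Phi>'$(a*d+b)) * fA k a i * \<Phi>$(i*d+l)))" for k j l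
  have GH: "(\<Sum>b<d. fB k b j * Ap k b l) = of_nat d * H k j l" for k j l
    unfolding Ap_def H_def by (simp add: sum_distrib_left ac_simps)
  define Tm where "Tm k = cmod (H k 0 0 + (\<Sum>m\<in>{1..<d}. complex_of_real (x m) * H k m m)) ^ 2 + (\<Sum>m\<in>{1..<d}. (1 - x m ^ 2) * cmod (H k 0 m) ^ 2)" for k
  have "expect \<Phi>' (apply_kraus (d*d) Ks (rho_out d (Omega_kraus d x) \<Phi>))
     = sum_list (map (\<lambda>K. sum_list (map (\<lambda>A. cmod (ip \<Phi>' (K *\<^sub>v (kron (1\<^sub>m d) A *\<^sub>v \<Phi>))) ^ 2) (Omega_kraus d x))) Ks)"
    by (rule expect_formula[OF cK omega_carrier dP dP'])
  also have "\<dots> = (\<Sum>k<L. \<Sum>m<d. cmod (ip \<Phi>' (Ks!k *\<^sub>v (kron (1\<^sub>m d) (kraus_A d x m) *\<^sub>v \<Phi>))) ^ 2)"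
    unfolding L_def sl_omega by (simp add: sum_list_sum_nth atLeast0LessThan)
  also have "\<dots> = (\<Sum>k<L. Tm k)"
  proof (rule sum.cong[OF refl])
    fix k assume "k \<in> {..<L}"
    then have k: "k < L" by simp
    show "(\<Sum>m<d. cmod (ip \<Phi>' (Ks!k *\<^sub>v (kron (1\<^sub>m d) (kraus_A d x m) *\<^sub>v \<Phi>))) ^ 2) = Tm k"
      unfolding MAB(3)[OF k] Tm_def H_def fA_def fB_def
      by (rule term_formula[OF MAB(1,2)[OF k] d0 dP' dP xr])
  qed
  finally have ex: "expect \<Phi>' (apply_kraus (d*d) Ks (rho_out d (Omega_kraus d x) \<Phi>)) = (\<Sum>k<L. Tm k)" .
  have ME: "(\<Sum>k<L. cmod ((\<Sum>b<d. fB k b 0 * Ap k b 0) + (\<Sum>m\<in>{1..<d}. complex_of_real (x m) * (\<Sum>b<d. fB k b m * Ap k b m))) ^ 2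
     + (\<Sum>m\<in>{1..<d}. (1 - x m ^ 2) * cmod (\<Sum>b<d. fB k b 0 * Ap k b m) ^ 2))
     \<le> 1 + (\<Sum>m\<in>{1..<d}. 1 + real d * x m ^ 2 - x m ^ 2 * (1 - x m) ^ 2 / 4)"
    by (rule main_est[OF d2 xr CC])
  have "(\<Sum>k<L. cmod ((\<Sum>b<d. fB k b 0 * Ap k b 0) + (\<Sum>m\<in>{1..<d}. complex_of_real (x m) * (\<Sum>b<d. fB k b m * Ap k b m))) ^ 2
     + (\<Sum>m\<in>{1..<d}. (1 - x m ^ 2) * cmod (\<Sum>b<d. fB k b 0 * Ap k b m) ^ 2)) = (real d)^2 * (\<Sum>k<L. Tm k)"
  proof -
    have "cmod ((\<Sum>b<d. fB k b 0 * Ap k b 0) + (\<Sum>m\<in>{1..<d}. complex_of_real (x m) * (\<Sum>b<d. fB k b m * Ap k b m))) ^ 2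
     + (\<Sum>m\<in>{1..<d}. (1 - x m ^ 2) * cmod (\<Sum>b<d. fB k b 0 * Ap k b m) ^ 2) = (real d)^2 * Tm k" for k
    proof -
      have "(\<Sum>b<d. fB k b 0 * Ap k b 0) + (\<Sum>m\<in>{1..<d}. complex_of_real (x m) * (\<Sum>b<d. fB k b m * Ap k b m))
          = of_nat d * (H k 0 0 + (\<Sum>m\<in>{1..<d}. complex_of_real (x m) * H k m m))"
        unfolding GH by (simp add: sum_distrib_left distrib_left ac_simps)
      then have e1: "cmod ((\<Sum>b<d. fB k b 0 * Ap k b 0) + (\<Sum>m\<in>{1..<d}. complex_of_real (x m) * (\<Sum>b<d. fB k b m * Ap k b m))) ^ 2
          = (real d)^2 * cmod (H k 0 0 + (\<Sum>m\<in>{1..<d}. complex_of_real (x m) * H k m m)) ^ 2"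
        by (simp add: norm_mult power_mult_distrib)
      have e2: "(\<Sum>m\<in>{1..<d}. (1 - x m ^ 2) * cmod (\<Sum>b<d. fB k b 0 * Ap k b m) ^ 2) = (real d)^2 * (\<Sum>m\<in>{1..<d}. (1 - x m ^ 2) * cmod (H k 0 m) ^ 2)"
        unfolding GH by (simp add: norm_mult power_mult_distrib sum_distrib_left ac_simps)
      show ?thesis unfolding e1 e2 Tm_def by (simp add: distrib_left)
    qed
    then show ?thesis by (simp add: sum_distrib_left)
  qed
  then have "(real d)^2 * (\<Sum>k<L. Tm k) \<le> 1 + (\<Sum>m\<in>{1..<d}. 1 + real d * x m ^ 2 - x m ^ 2 * (1 - x m) ^ 2 / 4)"
    using ME by simp
  then show ?thesis unfolding ex using d0 by (simp add: field_simps)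
qed


definition nsq :: "complex vec \<Rightarrow> real" where
  "nsq v = (\<Sum>i<dim_vec v. cmod (v$i) ^ 2)"

lemma of_real_sum_list: "complex_of_real (sum_list (map f xs)) = sum_list (map (\<lambda>x. complex_of_real (f x)) xs)"
  by (induction xs) auto

lemma compl_nsq:
  assumes C: "compl n Ks" and cK: "\<forall>K\<in>set Ks. K \<in> carrier_mat n n" and dy: "dim_vec y = n"
  shows "sum_list (map (\<lambda>K. nsq (K *\<^sub>v y)) Ks) = nsq y"
proof -
  have one: "complex_of_real (nsq (K *\<^sub>v y)) = (\<Sum>c<n. \<Sum>c'<n. y$c * cnj (y$c') * gram K c' c)" if K: "K \<in> carrier_mat n n" for K
  proof -
    have dK: "dim_vec (K *\<^sub>v y) = n" using K by simp
    have "complex_of_real (nsq (K *\<^sub>v y)) = (\<Sum>r<n. (K *\<^sub>v y)$r * cnj ((K *\<^sub>v y)$r))"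
      unfolding nsq_def dK by (rule sum_cmod_sq_complex)
    also have "\<dots> = (\<Sum>r<n. (\<Sum>c<n. K$$(r,c) * y$c) * cnj (\<Sum>c'<n. K$$(r,c') * y$c'))"
      using K dy by (intro sum.cong refl) (simp add: mult_vec_entry del: index_mult_mat_vec)
    also have "\<dots> = (\<Sum>r<n. \<Sum>c<n. \<Sum>c'<n. y$c * cnj (y$c') * (cnj (K$$(r,c')) * K$$(r,c)))"
    proof (rule sum.cong[OF refl])
      fix r
      have "(\<Sum>c<n. K$$(r,c) * y$c) * cnj (\<Sum>c'<n. K$$(r,c') * y$c') = (\<Sum>c<n. \<Sum>c'<n. (K$$(r,c) * y$c) * cnj (K$$(r,c') * y$c'))"
        by (simp only: cnj_sum sum_product)
      also have "\<dots> = (\<Sum>c<n. \<Sum>c'<n. y$c * cnj (y$c') * (cnj (K$$(r,c')) * K$$(r,c)))"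
        by (intro sum.cong refl) (simp add: ac_simps)
      finally show "(\<Sum>c<n. K$$(r,c) * y$c) * cnj (\<Sum>c'<n. K$$(r,c') * y$c') = (\<Sum>c<n. \<Sum>c'<n. y$c * cnj (y$c') * (cnj (K$$(r,c')) * K$$(r,c)))" .
    qed
    also have "\<dots> = (\<Sum>c<n. \<Sum>r<n. \<Sum>c'<n. y$c * cnj (y$c') * (cnj (K$$(r,c')) * K$$(r,c)))"
      by (rule sum.swap)
    also have "\<dots> = (\<Sum>c<n. \<Sum>c'<n. \<Sum>r<n. y$c * cnj (y$c') * (cnj (K$$(r,c')) * K$$(r,c)))"
      by (rule sum.cong[OF refl], rule sum.swap)
    also have "\<dots> = (\<Sum>c<n. \<Sum>c'<n. y$c * cnj (y$c') * gram K c' c)"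
      using K unfolding gram_def by (simp add: sum_distrib_left)
    finally show ?thesis .
  qed
  have "complex_of_real (sum_list (map (\<lambda>K. nsq (K *\<^sub>v y)) Ks)) = sum_list (map (\<lambda>K. \<Sum>c<n. \<Sum>c'<n. y$c * cnj (y$c') * gram K c' c) Ks)"
    unfolding of_real_sum_list using cK one by (intro sl_cong) auto
  also have "\<dots> = (\<Sum>c<n. \<Sum>c'<n. y$c * cnj (y$c') * sum_list (map (\<lambda>K. gram K c' c) Ks))"
    by (simp add: sl_sum_swap sum_list_const_mult)
  also have "\<dots> = (\<Sum>c<n. \<Sum>c'<n. if c' = c then y$c * cnj (y$c) else 0)"
    using C unfolding compl_def by (intro sum.cong refl) auto
  also have "\<dots> = (\<Sum>c<n. y$c * cnj (y$c))" by simp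
  also have "\<dots> = complex_of_real (nsq y)" unfolding nsq_def dy by (rule sum_cmod_sq_complex[symmetric])
  finally show ?thesis by (simp only: of_real_eq_iff)
qed

lemma ip_CS:
  assumes "dim_vec u = dim_vec w"
  shows "cmod (ip u w) ^ 2 \<le> nsq u * nsq w"
proof -
  have "ip u w = (\<Sum>i<dim_vec u. w$i * cnj (u$i))" unfolding ip_def by (simp add: mult.commute)
  then have "cmod (ip u w) ^ 2 \<le> (\<Sum>i<dim_vec u. cmod (w$i) ^ 2) * (\<Sum>i<dim_vec u. cmod (u$i) ^ 2)"
    using CS_complex[of "{..<dim_vec u}" "\<lambda>i. w$i" "\<lambda>i. u$i"] by simp
  then show ?thesis unfolding nsq_def using assms by (simp add: mult.commute)
qed

lemma nsq_kron1:
  assumes A: "A \<in> carrier_mat d d" and Ab: "\<forall>j<d. \<forall>l<d. cmod (A$$(j,l)) \<le> 1" and dp: "dim_vec \<psi> = d*d"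
  shows "nsq (kron (1\<^sub>m d) A *\<^sub>v \<psi>) \<le> (real d)^2 * nsq \<psi>"
proof -
  have rowb: "(\<Sum>l<d. cmod (A$$(j,l)) ^ 2) \<le> real d" if j: "j < d" for j
  proof -
    have "(\<Sum>l<d. cmod (A$$(j,l)) ^ 2) \<le> (\<Sum>l<d. 1)"
      using Ab j by (intro sum_mono) (simp add: power_le_one)
    then show ?thesis by simp
  qed
  have dk: "dim_vec (kron (1\<^sub>m d) A *\<^sub>v \<psi>) = d*d" using A by simp
  have "nsq (kron (1\<^sub>m d) A *\<^sub>v \<psi>) = (\<Sum>i<d. \<Sum>j<d. cmod ((kron (1\<^sub>m d) A *\<^sub>v \<psi>)$(i*d+j)) ^ 2)"
    unfolding nsq_def dk by (rule sum_split_prod)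
  also have "\<dots> = (\<Sum>i<d. \<Sum>j<d. cmod (\<Sum>l<d. A$$(j,l) * cnj (cnj (\<psi>$(i*d+l)))) ^ 2)"
    using kron1_vec[OF A dp] by (intro sum.cong refl) simp
  also have "\<dots> \<le> (\<Sum>i<d. \<Sum>j<d. (\<Sum>l<d. cmod (A$$(j,l)) ^ 2) * (\<Sum>l<d. cmod (cnj (\<psi>$(i*d+l))) ^ 2))"
    by (intro sum_mono CS_complex) auto
  also have "\<dots> \<le> (\<Sum>i<d. \<Sum>j<d. real d * (\<Sum>l<d. cmod (\<psi>$(i*d+l)) ^ 2))"
  proof (intro sum_mono)
    fix i j assume "j \<in> {..<d}"
    then show "(\<Sum>l<d. cmod (A$$(j,l)) ^ 2) * (\<Sum>l<d. cmod (cnj (\<psi>$(i*d+l))) ^ 2) \<le> real d * (\<Sum>l<d. cmod (\<psi>$(i*d+l)) ^ 2)"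
    proof -
      have "(\<Sum>l<d. cmod (A$$(j,l)) ^ 2) * (\<Sum>l<d. cmod (\<psi>$(i*d+l)) ^ 2) \<le> real d * (\<Sum>l<d. cmod (\<psi>$(i*d+l)) ^ 2)"
        using rowb \<open>j \<in> {..<d}\<close> by (intro mult_right_mono) (auto intro: sum_nonneg)
      then show ?thesis by simp
    qed
  qed
  also have "\<dots> = (real d)^2 * (\<Sum>i<d. \<Sum>l<d. cmod (\<psi>$(i*d+l)) ^ 2)"
    by (simp add: sum_distrib_left power2_eq_square mult.assoc)
  also have "(\<Sum>i<d. \<Sum>l<d. cmod (\<psi>$(i*d+l)) ^ 2) = nsq \<psi>"
    unfolding nsq_def dp by (simp add: sum_split_prod)
  finally show ?thesis .
qed

lemma kraus_bounded:
  assumes xr: "\<forall>m\<in>{1..<d}. 0 < x m \<and> x m < 1" and m: "m < d" and j: "j < d" and l: "l < d"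
  shows "cmod (kraus_A d x m $$ (j,l)) \<le> 1"
proof (cases "m = 0")
  case True
  show ?thesis
  proof (cases "j = l \<and> j \<noteq> 0")
    case True
    then have "0 < x j" "x j < 1" using xr j by auto
    then show ?thesis using \<open>m = 0\<close> j l True by (simp add: kraus0_idx)
  next
    case False
    then show ?thesis using \<open>m = 0\<close> j l by (auto simp: kraus0_idx)
  qed
next
  case False
  then have "0 < x m" "x m < 1" using xr m by auto
  then have "x m ^ 2 \<le> 1" "0 \<le> x m ^ 2" by (auto intro: power_le_one)
  then have "sqrt (1 - x m ^ 2) \<le> 1" "0 \<le> sqrt (1 - x m ^ 2)" by auto
  then show ?thesis using False j l by (simp add: krausm_idx)
qed

lemma gen_bound:
  assumes d0: "0 < d" and xr: "\<forall>m\<in>{1..<d}. 0 < x m \<and> x m < 1" and LC: "LOCC_channel d Ks"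
    and uP: "is_unit_vec (d*d) \<Phi>'" and up: "is_unit_vec (d*d) \<psi>"
  shows "expect \<Phi>' (apply_kraus (d*d) Ks (rho_out d (Omega_kraus d x) \<psi>)) \<le> (real d)^3"
proof -
  obtain E where E: "LOCC_instr d d d d E" and KsE: "Ks = concat E" using LC unfolding LOCC_channel_def by auto
  have PF: "\<forall>K\<in>set Ks. prod_form d d d d K" and CP: "compl (d*d) Ks" using LOCC_props[OF E] KsE by auto
  have cK: "\<forall>K\<in>set Ks. K \<in> carrier_mat (d*d) (d*d)" using PF prod_form_carrier by blast
  have dP: "dim_vec \<Phi>' = d*d" and nP: "nsq \<Phi>' = 1" and dp: "dim_vec \<psi> = d*d" and np: "nsq \<psi> = 1"
    using uP up unfolding is_unit_vec_def nsq_def by auto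
  define y where "y A = kron (1\<^sub>m d) A *\<^sub>v \<psi>" for A
  have dy: "A \<in> carrier_mat d d \<Longrightarrow> dim_vec (y A) = d*d" for A unfolding y_def by simp
  have "expect \<Phi>' (apply_kraus (d*d) Ks (rho_out d (Omega_kraus d x) \<psi>))
      = sum_list (map (\<lambda>K. sum_list (map (\<lambda>A. cmod (ip \<Phi>' (K *\<^sub>v y A)) ^ 2) (Omega_kraus d x))) Ks)"
    unfolding y_def by (rule expect_formula[OF cK omega_carrier dp dP])
  also have "\<dots> \<le> sum_list (map (\<lambda>K. sum_list (map (\<lambda>A. nsq (K *\<^sub>v y A)) (Omega_kraus d x))) Ks)"
  proof (intro sum_list_mono)
    fix K A assume K: "K \<in> set Ks" and A: "A \<in> set (Omega_kraus d x)"
    have "cmod (ip \<Phi>' (K *\<^sub>v y A)) ^ 2 \<le> nsq \<Phi>' * nsq (K *\<^sub>v y A)"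
      using K cK dP by (intro ip_CS) auto
    then show "cmod (ip \<Phi>' (K *\<^sub>v y A)) ^ 2 \<le> nsq (K *\<^sub>v y A)" using nP by simp
  qed
  also have "\<dots> = sum_list (map (\<lambda>A. sum_list (map (\<lambda>K. nsq (K *\<^sub>v y A)) Ks)) (Omega_kraus d x))"
    by (rule sl_swap)
  also have "\<dots> = sum_list (map (\<lambda>A. nsq (y A)) (Omega_kraus d x))"
    using compl_nsq[OF CP cK] dy omega_carrier by (intro sl_cong) auto
  also have "\<dots> \<le> sum_list (map (\<lambda>A. (real d)^2) (Omega_kraus d x))"
  proof (intro sum_list_mono)
    fix A assume A: "A \<in> set (Omega_kraus d x)"
    then obtain m where m: "m < d" and Am: "A = kraus_A d x m" unfolding Omega_kraus_def by auto
    have "nsq (y A) \<le> (real d)^2 * nsq \<psi>"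
      unfolding y_def Am using kraus_bounded[OF xr m] by (intro nsq_kron1[OF kraus_carrier _ dp]) auto
    then show "nsq (y A) \<le> (real d)^2" using np by simp
  qed
  also have "\<dots> = (real d)^3" unfolding sl_omega by (simp add: power3_eq_cube power2_eq_square)
  finally show ?thesis .
qed


lemma ptrace_entry:
  assumes dP: "dim_vec \<Phi> = d*d" and i: "i < d" and k: "k < d"
  shows "ptrace_B d d (ket_bra \<Phi>) $$ (i,k) = (\<Sum>j<d. \<Phi>$(i*d+j) * cnj (\<Phi>$(k*d+j)))"
  using i k dP by (auto simp: ptrace_B_def ket_bra_def idx_lt intro!: sum.cong)

definition phip :: "nat \<Rightarrow> complex vec" where
  "phip d = vec (d*d) (\<lambda>r. if r div d = r mod d then complex_of_real (1 / sqrt (real d)) else 0)"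

lemma phip_idx: "i < d \<Longrightarrow> j < d \<Longrightarrow> phip d $ (i*d+j) = (if i = j then complex_of_real (1 / sqrt (real d)) else 0)"
  by (simp add: phip_def idx_lt)

lemma sum_delta_sq: "(\<Sum>i<(d::nat). \<Sum>j<d. if i = j then f i else 0) = (\<Sum>i<d. f i)"
  by (simp add: sum.delta)

lemma phip_max_ent:
  assumes d0: "0 < d"
  shows "max_ent d (phip d)"
proof -
  have dim: "dim_vec (phip d) = d*d" by (simp add: phip_def)
  have sq: "cmod (complex_of_real (1 / sqrt (real d))) ^ 2 = 1 / real d"
  proof -
    have "cmod (complex_of_real (1 / sqrt (real d))) = \<bar>1 / sqrt (real d)\<bar>" by (rule norm_of_real)
    then show ?thesis using d0 by (simp add: power_divide)
  qed
  have "(\<Sum>r<d*d. cmod (phip d $ r) ^ 2) = (\<Sum>i<d. \<Sum>j<d. cmod (phip d $ (i*d+j)) ^ 2)"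
    by (rule sum_split_prod)
  also have "\<dots> = (\<Sum>i<d. \<Sum>j<d. if i = j then 1 / real d else 0)"
    using sq by (intro sum.cong refl) (auto simp: phip_idx)
  also have "\<dots> = 1" using d0 by (simp add: sum.delta)
  finally have u: "is_unit_vec (d*d) (phip d)" unfolding is_unit_vec_def using dim by simp
  have pt: "ptrace_B d d (ket_bra (phip d)) = (1 / of_nat d) \<cdot>\<^sub>m (1\<^sub>m d)"
  proof (rule eq_matI)
    fix i k assume "i < dim_row ((1 / of_nat d) \<cdot>\<^sub>m (1\<^sub>m d :: complex mat))" "k < dim_col ((1 / of_nat d) \<cdot>\<^sub>m (1\<^sub>m d :: complex mat))"
    then have ik: "i < d" "k < d" by auto
    have "ptrace_B d d (ket_bra (phip d)) $$ (i,k) = (\<Sum>j<d. phip d $ (i*d+j) * cnj (phip d $ (k*d+j)))"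
      by (rule ptrace_entry[OF dim ik])
    also have "\<dots> = (\<Sum>j<d. if j = i then (if i = k then 1 / of_nat d else 0) else 0)"
    proof (intro sum.cong refl)
      fix j assume "j \<in> {..<d}"
      then show "phip d $ (i*d+j) * cnj (phip d $ (k*d+j)) = (if j = i then (if i = k then 1 / of_nat d else 0) else 0)"
        using ik d0 by (auto simp: phip_idx of_real_mult[symmetric] simp del: of_real_mult)
    qed
    also have "\<dots> = ((1 / of_nat d) \<cdot>\<^sub>m (1\<^sub>m d)) $$ (i,k)" using ik by simp
    finally show "ptrace_B d d (ket_bra (phip d)) $$ (i,k) = ((1 / of_nat d) \<cdot>\<^sub>m (1\<^sub>m d)) $$ (i,k)" .
  qed (auto simp: ptrace_B_def)
  show ?thesis unfolding max_ent_def using u pt by simp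
qed

lemma adj_one: "adj (1\<^sub>m n) = 1\<^sub>m n"
  by (rule eq_matI) (auto simp: adj_def)

lemma kron_one: "kron (1\<^sub>m d) (1\<^sub>m d) = 1\<^sub>m (d*d)"
proof (rule eq_matI)
  fix r c assume "r < dim_row (1\<^sub>m (d*d) :: complex mat)" "c < dim_col (1\<^sub>m (d*d) :: complex mat)"
  then have rc: "r < d*d" "c < d*d" by auto
  then have "r div d < d" "c div d < d" "r mod d < d" "c mod d < d" using div_mod_lt by blast+
  moreover have "(r div d = c div d \<and> r mod d = c mod d) = (r = c)" by (metis div_mult_mod_eq)
  ultimately show "kron (1\<^sub>m d) (1\<^sub>m d) $$ (r,c) = (1\<^sub>m (d*d)) $$ (r,c)" using rc by (auto simp: kron_def)
qed auto

definition Kid :: "nat \<Rightarrow> complex mat list" where "Kid d = [kron (1\<^sub>m d) (1\<^sub>m d)]"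

lemma Kid_LOCC: "LOCC_channel d (Kid d)"
proof -
  have "foldr (\<lambda>K S. adj K * K + S) (concat [[1\<^sub>m d]]) (0\<^sub>m d d) = (1\<^sub>m d :: complex mat)"
    by (simp add: adj_one)
  then have "LOCC_instr d d d d (map (map (\<lambda>K. kron K (1\<^sub>m d))) [[1\<^sub>m d]])"
    by (intro LOCC_instr.alice) auto
  then show ?thesis unfolding LOCC_channel_def Kid_def by (intro exI[of _ "[[kron (1\<^sub>m d) (1\<^sub>m d)]]"]) auto
qed

lemma Kid_apply: "R \<in> carrier_mat (d*d) (d*d) \<Longrightarrow> apply_kraus (d*d) (Kid d) R = R"
  by (simp add: Kid_def kron_one apply_kraus_def adj_one)

lemma rho_carrier:
  assumes As: "\<forall>A\<in>set As. A \<in> carrier_mat d d" and dp: "dim_vec \<psi> = d*d"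
  shows "rho_out d As \<psi> \<in> carrier_mat (d*d) (d*d)"
proof -
  have k1: "kbs (d*d) [\<psi>] (ket_bra \<psi>)" using ket_bra_kbs[of \<psi>] unfolding dp .
  have cL: "\<forall>L\<in>set (map (kron (1\<^sub>m d)) As). L \<in> carrier_mat (d*d) (d*d)"
  proof
    fix L assume "L \<in> set (map (kron (1\<^sub>m d)) As)"
    then obtain A where A: "A \<in> set As" and L: "L = kron (1\<^sub>m d) A" by auto
    have "A \<in> carrier_mat d d" using A As by auto
    then show "L \<in> carrier_mat (d*d) (d*d)" unfolding L carrier_mat_def by simp
  qed
  show ?thesis using apply_kraus_kbs[OF cL k1] unfolding rho_out_def kbs_def by auto
qed


definition vv :: "(nat \<Rightarrow> real) \<Rightarrow> nat \<Rightarrow> real" where "vv x j = (if j = 0 then 1 else x j)"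
definition Qs :: "nat \<Rightarrow> (nat \<Rightarrow> real) \<Rightarrow> real" where "Qs d x = (\<Sum>m\<in>{1..<d}. x m ^ 2)"
definition psip :: "nat \<Rightarrow> (nat \<Rightarrow> real) \<Rightarrow> complex vec" where
  "psip d x = vec (d*d) (\<lambda>r. if r div d = r mod d then complex_of_real (vv x (r mod d) / sqrt (1 + Qs d x)) else 0)"

lemma psip_idx: "i < d \<Longrightarrow> j < d \<Longrightarrow> psip d x $ (i*d+j) = (if i = j then complex_of_real (vv x j / sqrt (1 + Qs d x)) else 0)"
  by (simp add: psip_def idx_lt)

lemma Qs_nonneg: "0 \<le> Qs d x" unfolding Qs_def by (simp add: sum_nonneg)

lemma vv_sum: "0 < d \<Longrightarrow> (\<Sum>j<d. vv x j ^ 2) = 1 + Qs d x"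
  unfolding Qs_def by (subst sum_lessThan_0_split) (auto simp: vv_def intro!: sum.cong)

lemma psip_unit:
  assumes d0: "0 < d"
  shows "is_unit_vec (d*d) (psip d x)"
proof -
  define N where "N = sqrt (1 + Qs d x)"
  have N2: "N^2 = 1 + Qs d x" unfolding N_def using Qs_nonneg[of d x] by simp
  have Npos: "N > 0" unfolding N_def using Qs_nonneg[of d x] by simp
  have "(\<Sum>r<d*d. cmod (psip d x $ r) ^ 2) = (\<Sum>i<d. \<Sum>j<d. cmod (psip d x $ (i*d+j)) ^ 2)"
    by (rule sum_split_prod)
  also have "\<dots> = (\<Sum>i<d. \<Sum>j<d. if i = j then (vv x i / N) ^ 2 else 0)"
  proof (intro sum.cong refl)
    fix i j assume ij: "i \<in> {..<d}" "j \<in> {..<d}"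
    have e: "psip d x $ (i*d+j) = (if i = j then complex_of_real (vv x j / N) else 0)"
      unfolding N_def by (rule psip_idx) (use ij in auto)
    show "cmod (psip d x $ (i*d+j)) ^ 2 = (if i = j then (vv x i / N) ^ 2 else 0)"
      unfolding e by (simp only: norm_of_real power2_abs split: if_split) simp
  qed
  also have "\<dots> = (\<Sum>i<d. (vv x i / N) ^ 2)" by (simp only: sum.delta' finite_lessThan lessThan_iff if_True cong: if_cong) simp
  also have "\<dots> = (\<Sum>i<d. vv x i ^ 2) / N^2" by (simp only: power_divide sum_divide_distrib)
  also have "\<dots> = 1" unfolding vv_sum[OF d0, of x] N2 using Qs_nonneg[of d x] by simp
  finally have s: "(\<Sum>r<d*d. cmod (psip d x $ r) ^ 2) = 1" .
  moreover have "dim_vec (psip d x) = d*d" by (simp add: psip_def)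
  ultimately show ?thesis unfolding is_unit_vec_def by simp
qed

lemma Qs_lt:
  assumes d2: "d \<ge> 2" and xr: "\<forall>m\<in>{1..<d}. 0 < x m \<and> x m < 1"
  shows "Qs d x < real d - 1"
proof -
  have "Qs d x < (\<Sum>m\<in>{1..<d}. 1)"
    unfolding Qs_def
  proof (rule sum_strict_mono)
    show "{1..<d} \<noteq> {}" using d2 by auto
    fix m assume "m \<in> {1..<d}"
    then have "0 < x m" "x m < 1" using xr by auto
    then have "x m * x m < 1 * 1" by (intro mult_strict_mono) auto
    then show "x m ^ 2 < 1" by (simp add: power2_eq_square)
  qed auto
  moreover have "(\<Sum>m\<in>{1..<d}. (1::real)) = real d - 1" using d2 by (simp add: of_nat_diff)
  ultimately show ?thesis by simp
qed

lemma psip_not_max_ent: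
  assumes d2: "d \<ge> 2" and xr: "\<forall>m\<in>{1..<d}. 0 < x m \<and> x m < 1"
  shows "\<not> max_ent d (psip d x)"
proof
  assume me: "max_ent d (psip d x)"
  have d0: "0 < d" using d2 by auto
  define N where "N = sqrt (1 + Qs d x)"
  have N2: "N^2 = 1 + Qs d x" unfolding N_def using Qs_nonneg[of d x] by simp
  have "(\<Sum>j<d. psip d x $ (0*d+j) * cnj (psip d x $ (0*d+j))) = (\<Sum>j<d. if j = 0 then complex_of_real ((1/N)^2) else 0)"
  proof (intro sum.cong refl)
    fix j assume j: "j \<in> {..<d}"
    have e: "psip d x $ (0*d+j) = (if 0 = j then complex_of_real (vv x j / N) else 0)"
      unfolding N_def by (rule psip_idx) (use j d0 in auto)
    show "psip d x $ (0*d+j) * cnj (psip d x $ (0*d+j)) = (if j = 0 then complex_of_real ((1/N)^2) else 0)"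
      unfolding e by (simp add: vv_def power2_eq_square of_real_mult[symmetric] del: of_real_divide of_real_mult)
  qed
  also have "\<dots> = complex_of_real ((1/N)^2)" using d0 by simp
  finally have "complex_of_real ((1/N)^2) = 1 / of_nat d" using max_ent_rows[OF me d0 d0] by simp
  then have "complex_of_real ((1/N)^2) = complex_of_real (1 / real d)" by simp
  then have "(1/N)^2 = 1 / real d" by (simp only: of_real_eq_iff)
  moreover have "(1/N)^2 = 1 / N^2" by (rule power_one_over)
  ultimately have "1 / (1 + Qs d x) = 1 / real d" unfolding N2 by simp
  then have "1 + Qs d x = real d" by (metis inverse_eq_divide inverse_inverse_eq)
  then show False using Qs_lt[OF d2 xr] by simp
qed

lemma psip_lower:
  assumes d2: "d \<ge> 2" and xr: "\<forall>m\<in>{1..<d}. 0 < x m \<and> x m < 1"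
  shows "expect (phip d) (rho_out d (Omega_kraus d x) (psip d x)) \<ge> (1 + Qs d x) / real d"
proof -
  have d0: "0 < d" using d2 by auto
  define N where "N = sqrt (1 + Qs d x)"
  have N2: "N^2 = 1 + Qs d x" unfolding N_def using Qs_nonneg[of d x] by simp
  have Npos: "N > 0" unfolding N_def using Qs_nonneg[of d x] by simp
  have dP: "dim_vec (phip d) = d*d" by (simp add: phip_def)
  have dp: "dim_vec (psip d x) = d*d" by (simp add: psip_def)
  have rc: "rho_out d (Omega_kraus d x) (psip d x) \<in> carrier_mat (d*d) (d*d)"
    by (rule rho_carrier[OF omega_carrier dp])
  have "kron (1\<^sub>m d) (1\<^sub>m d) \<in> carrier_mat (d*d) (d*d)" unfolding kron_one by (rule one_carrier_mat)
  then have cK: "\<forall>K\<in>set (Kid d). K \<in> carrier_mat (d*d) (d*d)" by (simp add: Kid_def)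
  define H where "H j l = (\<Sum>b<d. (1\<^sub>m d :: complex mat)$$(b,j) * (\<Sum>a<d. \<Sum>i<d. cnj (phip d $(a*d+b)) * (1\<^sub>m d :: complex mat)$$(a,i) * psip d x $(i*d+l)))" for j l
  have Hjj: "H j j = complex_of_real (1 / sqrt (real d) * (vv x j / N))" if j: "j < d" for j
  proof -
    have "H j j = (\<Sum>b<d. if b = j then (\<Sum>a<d. \<Sum>i<d. cnj (phip d $(a*d+b)) * (1\<^sub>m d :: complex mat)$$(a,i) * psip d x $(i*d+j)) else 0)"
      unfolding H_def using j by (intro sum.cong refl) auto
    also have "\<dots> = (\<Sum>a<d. \<Sum>i<d. cnj (phip d $(a*d+j)) * (1\<^sub>m d :: complex mat)$$(a,i) * psip d x $(i*d+j))"
      using j by simp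
    also have "\<dots> = (\<Sum>a<d. if a = j then complex_of_real (1 / sqrt (real d) * (vv x j / N)) else 0)"
    proof (rule sum.cong[OF refl])
      fix a assume a: "a \<in> {..<d}"
      have "(\<Sum>i<d. cnj (phip d $(a*d+j)) * (1\<^sub>m d :: complex mat)$$(a,i) * psip d x $(i*d+j))
          = (\<Sum>i<d. if i = a then cnj (phip d $(a*d+j)) * psip d x $(a*d+j) else 0)"
        using a by (intro sum.cong refl) auto
      also have "\<dots> = cnj (phip d $(a*d+j)) * psip d x $(a*d+j)" using a by simp
      also have "\<dots> = (if a = j then complex_of_real (1 / sqrt (real d) * (vv x j / N)) else 0)"
        using a j by (simp add: phip_idx psip_idx N_def)
      finally show "(\<Sum>i<d. cnj (phip d $(a*d+j)) * (1\<^sub>m d :: complex mat)$$(a,i) * psip d x $(i*d+j))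
          = (if a = j then complex_of_real (1 / sqrt (real d) * (vv x j / N)) else 0)" .
    qed
    also have "\<dots> = complex_of_real (1 / sqrt (real d) * (vv x j / N))" using j by simp
    finally show ?thesis .
  qed
  have "H 0 0 + (\<Sum>m\<in>{1..<d}. complex_of_real (x m) * H m m) = complex_of_real (1 / sqrt (real d) * (1 / N) * (1 + Qs d x))"
  proof -
    define c where "c = 1 / sqrt (real d) * (1 / N)"
    have "(\<Sum>m\<in>{1..<d}. complex_of_real (x m) * H m m) = (\<Sum>m\<in>{1..<d}. complex_of_real (c * x m ^ 2))"
      unfolding c_def by (intro sum.cong refl) (auto simp: Hjj vv_def power2_eq_square)
    also have "\<dots> = complex_of_real (\<Sum>m\<in>{1..<d}. c * x m ^ 2)" by (simp only: of_real_sum)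
    also have "(\<Sum>m\<in>{1..<d}. c * x m ^ 2) = c * Qs d x" unfolding Qs_def by (simp only: sum_distrib_left)
    finally have h1: "(\<Sum>m\<in>{1..<d}. complex_of_real (x m) * H m m) = complex_of_real (c * Qs d x)" .
    have h0: "H 0 0 = complex_of_real c" using Hjj[OF d0] unfolding c_def by (simp add: vv_def)
    have "H 0 0 + (\<Sum>m\<in>{1..<d}. complex_of_real (x m) * H m m) = complex_of_real (c + c * Qs d x)"
      unfolding h0 h1 by (simp only: of_real_add)
    also have "c + c * Qs d x = c * (1 + Qs d x)" by (simp add: algebra_simps)
    finally show ?thesis unfolding c_def .
  qed
  then have Hv: "cmod (H 0 0 + (\<Sum>m\<in>{1..<d}. complex_of_real (x m) * H m m)) ^ 2 = (1 + Qs d x) / real d"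
  proof -
    assume e: "H 0 0 + (\<Sum>m\<in>{1..<d}. complex_of_real (x m) * H m m) = complex_of_real (1 / sqrt (real d) * (1 / N) * (1 + Qs d x))"
    have "cmod (complex_of_real (1 / sqrt (real d) * (1 / N) * (1 + Qs d x))) ^ 2 = (1 / sqrt (real d) * (1 / N) * (1 + Qs d x)) ^ 2"
      by (simp only: norm_of_real power2_abs)
    also have "\<dots> = (1 / real d) * (1 / N^2) * (1 + Qs d x)^2"
      using d0 by (simp add: power_mult_distrib power_divide)
    also have "\<dots> = (1 + Qs d x) / real d" using N2 Npos Qs_nonneg[of d x] by (simp add: power2_eq_square)
    finally show ?thesis unfolding e .
  qed
  have "expect (phip d) (rho_out d (Omega_kraus d x) (psip d x)) = expect (phip d) (apply_kraus (d*d) (Kid d) (rho_out d (Omega_kraus d x) (psip d x)))"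
    using Kid_apply[OF rc] by simp
  also have "\<dots> = (\<Sum>m<d. cmod (ip (phip d) (kron (1\<^sub>m d) (1\<^sub>m d) *\<^sub>v (kron (1\<^sub>m d) (kraus_A d x m) *\<^sub>v psip d x))) ^ 2)"
    unfolding expect_formula[OF cK omega_carrier dp dP] by (simp add: Kid_def sl_omega)
  also have "\<dots> = cmod (H 0 0 + (\<Sum>m\<in>{1..<d}. complex_of_real (x m) * H m m)) ^ 2 + (\<Sum>m\<in>{1..<d}. (1 - x m ^ 2) * cmod (H 0 m) ^ 2)"
    unfolding H_def by (rule term_formula[OF one_carrier_mat one_carrier_mat d0 dP dp xr])
  also have "\<dots> \<ge> (1 + Qs d x) / real d"
  proof -
    have "(\<Sum>m\<in>{1..<d}. (1 - x m ^ 2) * cmod (H 0 m) ^ 2) \<ge> 0"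
    proof (intro sum_nonneg mult_nonneg_nonneg)
      fix m assume "m \<in> {1..<d}"
      then have "0 < x m" "x m < 1" using xr by auto
      then have "x m ^ 2 \<le> 1" by (intro power_le_one) auto
      then show "0 \<le> 1 - x m ^ 2" by simp
    qed auto
    then show ?thesis using Hv by simp
  qed
  finally show ?thesis .
qed


theorem theorem1:
  fixes d :: nat and x :: "nat \<Rightarrow> real"
  assumes "d \<ge> 3"
    and "\<forall>i\<in>{1..d-1}. 0 < x i \<and> x i < 1"
    and "\<exists>i\<in>{1..d-1}. \<exists>j\<in>{1..d-1}. x i \<noteq> x j"
  shows "\<exists>\<psi>'. is_unit_vec (d*d) \<psi>' \<and> \<not> max_ent d \<psi>' \<and>
           (\<forall>\<Phi>. max_ent d \<Phi> \<longrightarrow>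
              channel_singlet_fraction d (Omega_kraus d x)
                \<ge> singlet_fraction d (rho_out d (Omega_kraus d x) \<psi>') \<and>
              singlet_fraction d (rho_out d (Omega_kraus d x) \<psi>')
                > max_singlet_fraction d (rho_out d (Omega_kraus d x) \<Phi>))"
proof -
  have d2: "d \<ge> 2" and d0: "0 < d" using assms(1) by auto
  have xr: "\<forall>m\<in>{1..<d}. 0 < x m \<and> x m < 1" using assms(2) by auto
  define T where "T = (1 + Qs d x) / real d"
  define U where "U = (1 + (\<Sum>m\<in>{1..<d}. 1 + real d * x m ^ 2 - x m ^ 2 * (1 - x m) ^ 2 / 4)) / (real d)^2"
  have UT: "U < T"
  proof -
    have mu: "0 < (\<Sum>m\<in>{1..<d}. x m ^ 2 * (1 - x m) ^ 2 / 4)"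
    proof (rule sum_pos)
      show "{1..<d} \<noteq> {}" using d2 by auto
      fix m assume "m \<in> {1..<d}"
      then have "0 < x m" "x m < 1" using xr by auto
      then show "0 < x m ^ 2 * (1 - x m) ^ 2 / 4" by simp
    qed auto
    have "(\<Sum>m\<in>{1..<d}. 1 + real d * x m ^ 2 - x m ^ 2 * (1 - x m) ^ 2 / 4)
        = (\<Sum>m\<in>{1..<d}. (1::real)) + real d * Qs d x - (\<Sum>m\<in>{1..<d}. x m ^ 2 * (1 - x m) ^ 2 / 4)"
      unfolding Qs_def by (simp add: sum.distrib sum_subtractf sum_distrib_left)
    also have "(\<Sum>m\<in>{1..<d}. (1::real)) = real d - 1" using d2 by (simp add: of_nat_diff)
    finally have e: "1 + (\<Sum>m\<in>{1..<d}. 1 + real d * x m ^ 2 - x m ^ 2 * (1 - x m) ^ 2 / 4)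
        = real d * (1 + Qs d x) - (\<Sum>m\<in>{1..<d}. x m ^ 2 * (1 - x m) ^ 2 / 4)" by (simp add: algebra_simps)
    have "U = (real d * (1 + Qs d x) - (\<Sum>m\<in>{1..<d}. x m ^ 2 * (1 - x m) ^ 2 / 4)) / (real d)^2"
      unfolding U_def e ..
    also have "\<dots> < (real d * (1 + Qs d x)) / (real d)^2"
      using mu d0 by (intro divide_strict_right_mono) auto
    also have "\<dots> = T" unfolding T_def using d0 by (simp add: power2_eq_square)
    finally show ?thesis .
  qed
  have me_unit: "\<And>\<Phi>. max_ent d \<Phi> \<Longrightarrow> is_unit_vec (d*d) \<Phi>" unfolding max_ent_def by auto
  have phipme: "max_ent d (phip d)" by (rule phip_max_ent[OF d0])
  have sfb: "singlet_fraction d (apply_kraus (d*d) Ks (rho_out d (Omega_kraus d x) \<psi>)) \<le> (real d)^3"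
    if u: "is_unit_vec (d*d) \<psi>" and L: "LOCC_channel d Ks" for \<psi> Ks
    unfolding singlet_fraction_def
  proof (rule cSup_least)
    show "{expect \<Phi> (apply_kraus (d*d) Ks (rho_out d (Omega_kraus d x) \<psi>)) | \<Phi>. max_ent d \<Phi>} \<noteq> {}"
      using phipme by auto
  next
    fix y assume "y \<in> {expect \<Phi> (apply_kraus (d*d) Ks (rho_out d (Omega_kraus d x) \<psi>)) | \<Phi>. max_ent d \<Phi>}"
    then obtain \<Phi> where y: "y = expect \<Phi> (apply_kraus (d*d) Ks (rho_out d (Omega_kraus d x) \<psi>))" and me: "max_ent d \<Phi>" by auto
    show "y \<le> (real d)^3" unfolding y by (rule gen_bound[OF d0 xr L me_unit[OF me] u])
  qed
  have rc: "rho_out d (Omega_kraus d x) \<psi> \<in> carrier_mat (d*d) (d*d)" if "is_unit_vec (d*d) \<psi>" for \<psi>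
    using that by (intro rho_carrier[OF omega_carrier]) (simp add: is_unit_vec_def)
  have msf_ge: "singlet_fraction d (rho_out d (Omega_kraus d x) \<psi>) \<le> max_singlet_fraction d (rho_out d (Omega_kraus d x) \<psi>)"
    and msf_le: "max_singlet_fraction d (rho_out d (Omega_kraus d x) \<psi>) \<le> (real d)^3"
    if u: "is_unit_vec (d*d) \<psi>" for \<psi>
  proof -
    let ?S = "{singlet_fraction d (apply_kraus (d*d) Ks (rho_out d (Omega_kraus d x) \<psi>)) | Ks. LOCC_channel d Ks}"
    have bdd: "bdd_above ?S" by (rule bdd_aboveI[of _ "(real d)^3"]) (use sfb[OF u] in auto)
    have mem: "singlet_fraction d (rho_out d (Omega_kraus d x) \<psi>) \<in> ?S"
      using Kid_LOCC[of d] Kid_apply[OF rc[OF u]] by (auto intro!: exI[of _ "Kid d"])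
    show "singlet_fraction d (rho_out d (Omega_kraus d x) \<psi>) \<le> max_singlet_fraction d (rho_out d (Omega_kraus d x) \<psi>)"
      unfolding max_singlet_fraction_def by (rule cSup_upper[OF mem bdd])
    show "max_singlet_fraction d (rho_out d (Omega_kraus d x) \<psi>) \<le> (real d)^3"
      unfolding max_singlet_fraction_def by (rule cSup_least) (use mem sfb[OF u] in auto)
  qed
  define \<psi>' where "\<psi>' = psip d x"
  have u': "is_unit_vec (d*d) \<psi>'" unfolding \<psi>'_def by (rule psip_unit[OF d0])
  have nme: "\<not> max_ent d \<psi>'" unfolding \<psi>'_def by (rule psip_not_max_ent[OF d2 xr])
  have csf: "singlet_fraction d (rho_out d (Omega_kraus d x) \<psi>') \<le> channel_singlet_fraction d (Omega_kraus d x)"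
  proof -
    let ?S = "{max_singlet_fraction d (rho_out d (Omega_kraus d x) \<psi>) | \<psi>. is_unit_vec (d*d) \<psi>}"
    have bdd: "bdd_above ?S" by (rule bdd_aboveI[of _ "(real d)^3"]) (use msf_le in auto)
    have mem: "max_singlet_fraction d (rho_out d (Omega_kraus d x) \<psi>') \<in> ?S" using u' by auto
    have "max_singlet_fraction d (rho_out d (Omega_kraus d x) \<psi>') \<le> channel_singlet_fraction d (Omega_kraus d x)"
      unfolding channel_singlet_fraction_def by (rule cSup_upper[OF mem bdd])
    then show ?thesis using msf_ge[OF u'] by linarith
  qed
  have sfT: "T \<le> singlet_fraction d (rho_out d (Omega_kraus d x) \<psi>')"
  proof -
    let ?S = "{expect \<Phi> (rho_out d (Omega_kraus d x) \<psi>') | \<Phi>. max_ent d \<Phi>}"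
    have bdd: "bdd_above ?S"
    proof (rule bdd_aboveI[of _ "(real d)^3"])
      fix y assume "y \<in> ?S"
      then obtain \<Phi> where y: "y = expect \<Phi> (rho_out d (Omega_kraus d x) \<psi>')" and me: "max_ent d \<Phi>" by auto
      have "y = expect \<Phi> (apply_kraus (d*d) (Kid d) (rho_out d (Omega_kraus d x) \<psi>'))"
        unfolding y using Kid_apply[OF rc[OF u']] by simp
      also have "\<dots> \<le> (real d)^3" by (rule gen_bound[OF d0 xr Kid_LOCC me_unit[OF me] u'])
      finally show "y \<le> (real d)^3" .
    qed
    have mem: "expect (phip d) (rho_out d (Omega_kraus d x) \<psi>') \<in> ?S" using phipme by auto
    have "expect (phip d) (rho_out d (Omega_kraus d x) \<psi>') \<le> singlet_fraction d (rho_out d (Omega_kraus d x) \<psi>')"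
      unfolding singlet_fraction_def by (rule cSup_upper[OF mem bdd])
    moreover have "T \<le> expect (phip d) (rho_out d (Omega_kraus d x) \<psi>')"
      unfolding T_def \<psi>'_def by (rule psip_lower[OF d2 xr])
    ultimately show ?thesis by linarith
  qed
  have msfU: "max_singlet_fraction d (rho_out d (Omega_kraus d x) \<Phi>) \<le> U" if me: "max_ent d \<Phi>" for \<Phi>
    unfolding max_singlet_fraction_def
  proof (rule cSup_least)
    show "{singlet_fraction d (apply_kraus (d*d) Ks (rho_out d (Omega_kraus d x) \<Phi>)) | Ks. LOCC_channel d Ks} \<noteq> {}"
      using Kid_LOCC[of d] by auto
  next
    fix y assume "y \<in> {singlet_fraction d (apply_kraus (d*d) Ks (rho_out d (Omega_kraus d x) \<Phi>)) | Ks. LOCC_channel d Ks}"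
    then obtain Ks where y: "y = singlet_fraction d (apply_kraus (d*d) Ks (rho_out d (Omega_kraus d x) \<Phi>))" and L: "LOCC_channel d Ks" by auto
    show "y \<le> U" unfolding y singlet_fraction_def
    proof (rule cSup_least)
      show "{expect \<Phi>' (apply_kraus (d*d) Ks (rho_out d (Omega_kraus d x) \<Phi>)) | \<Phi>'. max_ent d \<Phi>'} \<noteq> {}"
        using phipme by auto
    next
      fix z assume "z \<in> {expect \<Phi>' (apply_kraus (d*d) Ks (rho_out d (Omega_kraus d x) \<Phi>)) | \<Phi>'. max_ent d \<Phi>'}"
      then obtain \<Phi>' where z: "z = expect \<Phi>' (apply_kraus (d*d) Ks (rho_out d (Omega_kraus d x) \<Phi>))" and me': "max_ent d \<Phi>'" by auto
      show "z \<le> U" unfolding z U_def by (rule locc_bound[OF d2 xr L me me'])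
    qed
  qed
  show ?thesis
  proof (intro exI[of _ \<psi>'] conjI allI impI)
    show "is_unit_vec (d*d) \<psi>'" by (rule u')
    show "\<not> max_ent d \<psi>'" by (rule nme)
    fix \<Phi> assume me: "max_ent d \<Phi>"
    show "channel_singlet_fraction d (Omega_kraus d x) \<ge> singlet_fraction d (rho_out d (Omega_kraus d x) \<psi>')"
      by (rule csf)
    show "singlet_fraction d (rho_out d (Omega_kraus d x) \<psi>') > max_singlet_fraction d (rho_out d (Omega_kraus d x) \<Phi>)"
      using msfU[OF me] UT sfT by linarith
  qed
qed


end
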